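(* Let $m\in\mathbb{R}$, $A\in\mathbb{C}^{2\times2}$, $v\in L^1(\mathbb{R};\mathbb{R})\cap L^2(\mathbb{R};\mathbb{R})$ with $\int_{\mathbb{R}}v=1$, and $\varepsilon>0$. Then $z\in\mathbb{C}\setminus((-\infty,-|m|]\cup[|m|,+\infty))$ is an eigenvalue of $D^\varepsilon_A$ if and only if $$\det\Big(\sigma_0+\tfrac{i}{2}\alpha_1(\varepsilon k(z))AZ(z)\Big)=0.$$ The geometric multiplicity of such $z$ equals $\dim\ker\big(\sigma_0+\tfrac{i}{2}\alpha_1(\varepsilon k(z))AZ(z)\big)\le2$, and the eigenfunctions are exactly the functions $\psi(x)=\int_{\mathbb{R}}R_z(x,y)\tau v_\varepsilon(y)\,dy$ with $\tau\in\ker\big(\sigma_0+\tfrac{i}{2}\alpha_1(\varepsilon k(z))AZ(z)\big)\setminus\{0\}$.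
   Context: Let $\sigma_0=I_2$, $\sigma_1=\begin{pmatrix}0&1\\1&0\end{pmatrix}$, $\sigma_3=\begin{pmatrix}1&0\\0&-1\end{pmatrix}$. $D_0$ is the free Dirac operator $-i\sigma_1\frac{d}{dx}+m\sigma_3$ on $H^1(\mathbb{R};\mathbb{C}^2)$. For $\varepsilon>0$, $v_\varepsilon(x)=\varepsilon^{-1}v(x/\varepsilon)$, and $D^\varepsilon_A$ is the operator with domain $H^1(\mathbb{R};\mathbb{C}^2)$ acting by $(D^\varepsilon_A\psi)(x)=(D_0\psi)(x)+A\big(\int_{\mathbb{R}}v_\varepsilon(y)\psi(y)\,dy\big)v_\varepsilon(x)$. Branch convention: $\mathrm{Im}\sqrt{w}>0$ for $w\in\mathbb{C}\setminus[0,+\infty)$. For $z\in\mathbb{C}\setminus((-\infty,-|m|]\cup[|m|,+\infty))$: $k(z)=\sqrt{z^2-m^2}$, $\zeta(z)=\frac{z+m}{k(z)}$, $Z(z)=\mathrm{diag}(\zeta(z),\zeta(z)^{-1})$, $R_z(x,y)=\frac{i}{2}\big(Z(z)+\mathrm{sgn}(x-y)\sigma_1\big)e^{ik(z)|x-y|}$. For $w\in\mathbb{C}$ with $\mathrm{Im}\,w>0$, $\alpha_1(w)=\int_{\mathbb{R}^2}v(x)e^{iw|x-y|}v(y)\,dx\,dy$. *)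

theory Defs
  imports "HOL-Analysis.Analysis" "HOL-Library.Function_Algebras"
begin

type_synonym cvec = "complex ^ 2"
type_synonym cmat = "complex ^ 2 ^ 2"

definition sigma0 :: cmat where "sigma0 = mat 1"
definition sigma1 :: cmat where
  "sigma1 = (\<chi> i j. if i = j then 0 else 1)"
definition sigma3 :: cmat where
  "sigma3 = (\<chi> i j. if i = j then (if i = 1 then 1 else -1) else 0)"

definition L2 :: "(real \<Rightarrow> 'a::{banach, second_countable_topology}) \<Rightarrow> bool" where
  "L2 f \<longleftrightarrow> f \<in> borel_measurable lborel \<and> integrable lborel (\<lambda>x. (norm (f x))^2)"

text \<open>phi is a weak (= a.e.) derivative of psi: psi is absolutely continuous with
  psi b - psi a = integral of phi over [a,b].\<close>
definition is_weak_deriv :: "(real \<Rightarrow> cvec) \<Rightarrow> (real \<Rightarrow> cvec) \<Rightarrow> bool" where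
  "is_weak_deriv psi phi \<longleftrightarrow> (\<forall>a b. a \<le> b \<longrightarrow> (phi has_integral (psi b - psi a)) {a..b})"

text \<open>Sobolev space H^1(R;C^2), represented by continuous representatives.\<close>
definition H1 :: "(real \<Rightarrow> cvec) \<Rightarrow> bool" where
  "H1 psi \<longleftrightarrow> L2 psi \<and> (\<exists>phi. L2 phi \<and> is_weak_deriv psi phi)"

definition v_eps :: "(real \<Rightarrow> real) \<Rightarrow> real \<Rightarrow> real \<Rightarrow> real" where
  "v_eps v \<epsilon> x = v (x / \<epsilon>) / \<epsilon>"

definition D_action ::
  "real \<Rightarrow> cmat \<Rightarrow> (real \<Rightarrow> real) \<Rightarrow> real \<Rightarrow> (real \<Rightarrow> cvec) \<Rightarrow> (real \<Rightarrow> cvec) \<Rightarrow> real \<Rightarrow> cvec" where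
  "D_action m A v \<epsilon> psi phi x =
     (- \<i>) *s (sigma1 *v phi x) + (complex_of_real m) *s (sigma3 *v psi x)
     + v_eps v \<epsilon> x *\<^sub>R (A *v (integral\<^sup>L lborel (\<lambda>y. v_eps v \<epsilon> y *\<^sub>R psi y)))"

definition eigenspace ::
  "real \<Rightarrow> cmat \<Rightarrow> (real \<Rightarrow> real) \<Rightarrow> real \<Rightarrow> complex \<Rightarrow> (real \<Rightarrow> cvec) set" where
  "eigenspace m A v \<epsilon> z = {psi. H1 psi \<and> (\<exists>phi. L2 phi \<and> is_weak_deriv psi phi \<and>
      (AE x in lborel. D_action m A v \<epsilon> psi phi x = z *s psi x))}"

definition is_eigenfunction ::
  "real \<Rightarrow> cmat \<Rightarrow> (real \<Rightarrow> real) \<Rightarrow> real \<Rightarrow> complex \<Rightarrow> (real \<Rightarrow> cvec) \<Rightarrow> bool" where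
  "is_eigenfunction m A v \<epsilon> z psi \<longleftrightarrow> psi \<in> eigenspace m A v \<epsilon> z \<and> psi \<noteq> (\<lambda>x. 0)"

definition is_eigenvalue :: "real \<Rightarrow> cmat \<Rightarrow> (real \<Rightarrow> real) \<Rightarrow> real \<Rightarrow> complex \<Rightarrow> bool" where
  "is_eigenvalue m A v \<epsilon> z \<longleftrightarrow> (\<exists>psi. is_eigenfunction m A v \<epsilon> z psi)"

definition fscale :: "complex \<Rightarrow> (real \<Rightarrow> cvec) \<Rightarrow> (real \<Rightarrow> cvec)" where
  "fscale c f = (\<lambda>x. c *s f x)"

lemma fscale_vector_space: "vector_space fscale"
  by unfold_locales (auto simp: fscale_def fun_eq_iff vec.scale_right_distrib vec.scale_left_distrib)

definition geom_mult :: "real \<Rightarrow> cmat \<Rightarrow> (real \<Rightarrow> real) \<Rightarrow> real \<Rightarrow> complex \<Rightarrow> nat" where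
  "geom_mult m A v \<epsilon> z = vector_space.dim fscale (eigenspace m A v \<epsilon> z)"

text \<open>Square root with the branch Im sqrt w > 0 (for w not in [0,+infinity)).\<close>
definition sqrt_up :: "complex \<Rightarrow> complex" where
  "sqrt_up w = (THE s. s^2 = w \<and> Im s > 0)"

definition spec_gap :: "real \<Rightarrow> complex set" where
  "spec_gap m = - {complex_of_real t | t. t \<le> - \<bar>m\<bar> \<or> t \<ge> \<bar>m\<bar>}"

definition kk :: "real \<Rightarrow> complex \<Rightarrow> complex" where
  "kk m z = sqrt_up (z^2 - (complex_of_real m)^2)"

definition zeta :: "real \<Rightarrow> complex \<Rightarrow> complex" where
  "zeta m z = (z + complex_of_real m) / kk m z"

definition ZZ :: "real \<Rightarrow> complex \<Rightarrow> cmat" where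
  "ZZ m z = (\<chi> i j. if i = j then (if i = 1 then zeta m z else inverse (zeta m z)) else 0)"

definition Rz :: "real \<Rightarrow> complex \<Rightarrow> real \<Rightarrow> real \<Rightarrow> cmat" where
  "Rz m z x y = mat (\<i> / 2 * exp (\<i> * kk m z * complex_of_real \<bar>x - y\<bar>))
       ** (ZZ m z + mat (complex_of_real (sgn (x - y))) ** sigma1)"

definition alpha1 :: "(real \<Rightarrow> real) \<Rightarrow> complex \<Rightarrow> complex" where
  "alpha1 v w = (\<integral>x. (\<integral>y. complex_of_real (v x) * exp (\<i> * w * complex_of_real \<bar>x - y\<bar>)
                        * complex_of_real (v y) \<partial>lborel) \<partial>lborel)"

definition Mmat :: "real \<Rightarrow> cmat \<Rightarrow> (real \<Rightarrow> real) \<Rightarrow> real \<Rightarrow> complex \<Rightarrow> cmat" where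
  "Mmat m A v \<epsilon> z = sigma0 + mat (\<i> / 2 * alpha1 v (complex_of_real \<epsilon> * kk m z)) ** (A ** ZZ m z)"

definition psi_tau :: "real \<Rightarrow> (real \<Rightarrow> real) \<Rightarrow> real \<Rightarrow> complex \<Rightarrow> cvec \<Rightarrow> real \<Rightarrow> cvec" where
  "psi_tau m v \<epsilon> z \<tau> x = integral\<^sup>L lborel (\<lambda>y. v_eps v \<epsilon> y *\<^sub>R (Rz m z x y *v \<tau>))"

end

theory Submission
  imports Defs
begin

lemma exp_bound_le1:
  fixes k :: complex assumes "Im k > 0" "r \<ge> 0"
  shows "cmod (exp (\<i> * k * complex_of_real r)) \<le> 1"
proof -
  have "cmod (exp (\<i> * k * complex_of_real r)) = exp (- Im k * r)"
    by (simp add: norm_exp_eq_Re)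
  also have "\<dots> \<le> 1" using assms by (simp add: mult_nonneg_nonneg)
  finally show ?thesis .
qed

definition Ep :: "(real \<Rightarrow> real) \<Rightarrow> complex \<Rightarrow> real \<Rightarrow> complex" where
  "Ep w k x = (\<integral>y. (if y < x then complex_of_real (w y) * exp (\<i> * k * complex_of_real (x - y)) else 0) \<partial>lborel)"

lemma Ep_integrand_integrable:
  fixes k :: complex assumes w: "integrable lborel w" and k: "Im k > 0"
  shows "integrable lborel (\<lambda>y. if y < x then complex_of_real (w y) * exp (\<i> * k * complex_of_real (x - y)) else 0)"
proof (rule Bochner_Integration.integrable_bound[where f="\<lambda>y. w y"])
  show "integrable lborel w" by fact
  have [measurable]: "w \<in> borel_measurable lborel" using w by auto
  show "(\<lambda>y. if y < x then complex_of_real (w y) * exp (\<i> * k * complex_of_real (x - y)) else 0) \<in> borel_measurable lborel"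
    by measurable
  show "AE y in lborel. norm (if y < x then complex_of_real (w y) * exp (\<i> * k * complex_of_real (x - y)) else 0) \<le> norm (w y)"
  proof (intro AE_I2)
    fix y
    show "norm (if y < x then complex_of_real (w y) * exp (\<i> * k * complex_of_real (x - y)) else 0) \<le> norm (w y)"
    proof (cases "y < x")
      case True
      have "cmod (exp (\<i> * k * complex_of_real (x - y))) \<le> 1" using exp_bound_le1[OF k, of "x-y"] True by simp
      then show ?thesis using True by (simp add: norm_mult mult_left_le)
    qed simp
  qed
qed

context
  fixes w :: "real \<Rightarrow> real" and k :: complex
  assumes w: "integrable lborel w" and k: "Im k > 0"
begin

lemma w_meas: "w \<in> borel_measurable lborel"
  using w by auto

lemma Ep_bound: "cmod (Ep w k x) \<le> (\<integral>y. \<bar>w y\<bar> \<partial>lborel)"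
proof -
  have "cmod (Ep w k x) \<le> (\<integral>y. norm (if y < x then complex_of_real (w y) * exp (\<i> * k * complex_of_real (x - y)) else 0) \<partial>lborel)"
    unfolding Ep_def by (rule integral_norm_bound)
  also have "\<dots> \<le> (\<integral>y. \<bar>w y\<bar> \<partial>lborel)"
  proof (rule integral_mono)
    show "integrable lborel (\<lambda>y. norm (if y < x then complex_of_real (w y) * exp (\<i> * k * complex_of_real (x - y)) else 0))"
      using Ep_integrand_integrable[OF w k] by auto
    show "integrable lborel (\<lambda>y. \<bar>w y\<bar>)" using w by auto
    fix y
    show "norm (if y < x then complex_of_real (w y) * exp (\<i> * k * complex_of_real (x - y)) else 0) \<le> \<bar>w y\<bar>"
    proof (cases "y < x")
      case True
      have "cmod (exp (\<i> * k * complex_of_real (x - y))) \<le> 1" using exp_bound_le1[OF k, of "x-y"] True by simp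
      then show ?thesis using True by (simp add: norm_mult mult_left_le)
    qed simp
  qed
  finally show ?thesis .
qed

lemma Ep_meas: "Ep w k \<in> borel_measurable lborel"
proof -
  note w_meas[measurable]
  show ?thesis unfolding Ep_def[abs_def] by measurable
qed


lemma exp_kernel_nn: "(\<integral>\<^sup>+x. ennreal (if y \<le> x then exp (- Im k * (x - y)) else 0) \<partial>lborel) = ennreal (1 / Im k)"
proof -
  note w_meas[measurable] Ep_meas[measurable]
  have meas: "(\<lambda>x. ennreal (if y \<le> x then exp (- Im k * (x - y)) else 0)) \<in> borel_measurable borel"
    by measurable
  have "(\<integral>\<^sup>+x. ennreal (if y \<le> x then exp (- Im k * (x - y)) else 0) \<partial>lborel)
     = (\<integral>\<^sup>+x. ennreal (if y \<le> y + 1 * x then exp (- Im k * (y + 1 * x - y)) else 0) \<partial>lborel)"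
    using nn_integral_real_affine[OF meas, of 1 y] by simp
  also have "\<dots> = (\<integral>\<^sup>+x. ennreal (if 0 \<le> x then exp (- Im k * x) else 0) \<partial>lborel)"
    by (rule nn_integral_cong) simp
  also have "\<dots> = ennreal (1 / Im k)"
  proof (rule nn_integral_has_integral_lborel)
    show "(\<lambda>x. if 0 \<le> x then exp (- Im k * x) else 0) \<in> borel_measurable borel" by measurable
    show "\<And>x. 0 \<le> (if 0 \<le> x then exp (- Im k * x) else 0)" by simp
    have "((\<lambda>x. exp (- Im k * x)) has_integral exp (- Im k * 0) / Im k) {0..}"
      using has_integral_exp_minus_to_infinity[OF k, of 0] by simp
    then have "((\<lambda>x. if x \<in> {0..} then exp (- Im k * x) else 0) has_integral 1 / Im k) UNIV"
      by (subst has_integral_restrict_UNIV) simp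
    then show "((\<lambda>x. if 0 \<le> x then exp (- Im k * x) else 0) has_integral 1 / Im k) UNIV"
      by simp
  qed
  finally show ?thesis .
qed

lemma Ep_L1: "integrable lborel (Ep w k)"
proof (rule integrableI_bounded)
  note w_meas[measurable] Ep_meas[measurable]
  show "Ep w k \<in> borel_measurable lborel" by measurable
  define K where "K x y = ennreal (\<bar>w y\<bar> * (if y \<le> x then exp (- Im k * (x - y)) else 0))" for x y
  have Kmeas: "case_prod K \<in> borel_measurable (lborel \<Otimes>\<^sub>M lborel)"
    unfolding K_def by measurable
  have "(\<integral>\<^sup>+ x. ennreal (norm (Ep w k x)) \<partial>lborel) \<le> (\<integral>\<^sup>+ x. (\<integral>\<^sup>+y. K x y \<partial>lborel) \<partial>lborel)"
  proof (rule nn_integral_mono)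
    fix x
    have "ennreal (norm (Ep w k x)) \<le> (\<integral>\<^sup>+y. norm (if y < x then complex_of_real (w y) * exp (\<i> * k * complex_of_real (x - y)) else 0) \<partial>lborel)"
      unfolding Ep_def by (rule integral_norm_bound_ennreal[OF Ep_integrand_integrable[OF w k]])
    also have "\<dots> \<le> (\<integral>\<^sup>+y. K x y \<partial>lborel)"
    proof (rule nn_integral_mono)
      fix y
      show "ennreal (norm (if y < x then complex_of_real (w y) * exp (\<i> * k * complex_of_real (x - y)) else 0)) \<le> K x y"
        unfolding K_def by (auto simp: norm_mult norm_exp_eq_Re)
    qed
    finally show "ennreal (norm (Ep w k x)) \<le> (\<integral>\<^sup>+y. K x y \<partial>lborel)" .
  qed
  also have "\<dots> = (\<integral>\<^sup>+ y. (\<integral>\<^sup>+x. K x y \<partial>lborel) \<partial>lborel)"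
    by (rule lborel_pair.Fubini'[OF Kmeas, symmetric])
  also have "\<dots> = (\<integral>\<^sup>+ y. ennreal \<bar>w y\<bar> * ennreal (1 / Im k) \<partial>lborel)"
  proof (rule nn_integral_cong)
    fix y
    have "(\<integral>\<^sup>+x. K x y \<partial>lborel) = (\<integral>\<^sup>+x. ennreal \<bar>w y\<bar> * ennreal (if y \<le> x then exp (- Im k * (x - y)) else 0) \<partial>lborel)"
      unfolding K_def by (simp add: ennreal_mult)
    also have "\<dots> = ennreal \<bar>w y\<bar> * (\<integral>\<^sup>+x. ennreal (if y \<le> x then exp (- Im k * (x - y)) else 0) \<partial>lborel)"
      by (rule nn_integral_cmult) measurable
    also have "\<dots> = ennreal \<bar>w y\<bar> * ennreal (1 / Im k)"
      by (simp add: exp_kernel_nn)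
    finally show "(\<integral>\<^sup>+x. K x y \<partial>lborel) = ennreal \<bar>w y\<bar> * ennreal (1 / Im k)" .
  qed
  also have "\<dots> = (\<integral>\<^sup>+ y. ennreal \<bar>w y\<bar> \<partial>lborel) * ennreal (1 / Im k)"
    by (rule nn_integral_multc) measurable
  also have "\<dots> < \<infinity>"
  proof -
    have "(\<integral>\<^sup>+ y. ennreal \<bar>w y\<bar> \<partial>lborel) < \<infinity>"
      using w unfolding integrable_iff_bounded by simp
    then show ?thesis by (simp add: ennreal_mult_less_top)
  qed
  finally show "(\<integral>\<^sup>+ x. ennreal (norm (Ep w k x)) \<partial>lborel) < \<infinity>" .
qed

lemma Ep_L2: "integrable lborel (\<lambda>x. (cmod (Ep w k x))^2)"
proof (rule Bochner_Integration.integrable_bound[where f="\<lambda>x. (\<integral>y. \<bar>w y\<bar> \<partial>lborel) * cmod (Ep w k x)"])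
  note w_meas[measurable] Ep_meas[measurable]
  show "integrable lborel (\<lambda>x. (\<integral>y. \<bar>w y\<bar> \<partial>lborel) * cmod (Ep w k x))"
    using Ep_L1 by auto
  show "(\<lambda>x. (cmod (Ep w k x))\<^sup>2) \<in> borel_measurable lborel" by measurable
  show "AE x in lborel. norm ((cmod (Ep w k x))\<^sup>2) \<le> norm ((\<integral>y. \<bar>w y\<bar> \<partial>lborel) * cmod (Ep w k x))"
  proof (intro AE_I2)
    fix x
    have "(cmod (Ep w k x))\<^sup>2 \<le> (\<integral>y. \<bar>w y\<bar> \<partial>lborel) * cmod (Ep w k x)"
      unfolding power2_eq_square by (intro mult_right_mono Ep_bound) auto
    moreover have "0 \<le> (\<integral>y. \<bar>w y\<bar> \<partial>lborel)" by simp
    ultimately show "norm ((cmod (Ep w k x))\<^sup>2) \<le> norm ((\<integral>y. \<bar>w y\<bar> \<partial>lborel) * cmod (Ep w k x))"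
      by simp
  qed
qed

end

lemma exp_FTC:
  fixes k :: complex assumes k0: "k \<noteq> 0" and cb: "c \<le> b"
  shows "(\<integral>x. indicator {c..b} x *\<^sub>R exp (\<i> * k * complex_of_real (x - y)) \<partial>lborel)
    = (exp (\<i> * k * complex_of_real (b - y)) - exp (\<i> * k * complex_of_real (c - y))) / (\<i> * k)"
proof -
  have "(\<integral>x. indicator {c..b} x *\<^sub>R exp (\<i> * k * complex_of_real (x - y)) \<partial>lborel)
    = exp (\<i> * k * complex_of_real (b - y)) / (\<i> * k) - exp (\<i> * k * complex_of_real (c - y)) / (\<i> * k)"
  proof (rule integral_FTC_atLeastAtMost[where F="\<lambda>x. exp (\<i> * k * complex_of_real (x - y)) / (\<i> * k)"])
    show "c \<le> b" by fact
    fix x assume "c \<le> x" "x \<le> b"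
    have "((\<lambda>u. exp (\<i> * k * (u - complex_of_real y)) / (\<i> * k)) has_field_derivative
           exp (\<i> * k * (complex_of_real x - complex_of_real y))) (at (complex_of_real x))"
      using k0 by (auto intro!: derivative_eq_intros simp: field_simps)
    from has_vector_derivative_real_field[OF this]
    show "((\<lambda>x. exp (\<i> * k * complex_of_real (x - y)) / (\<i> * k)) has_vector_derivative
          exp (\<i> * k * complex_of_real (x - y))) (at x within {c..b})"
      by simp
  next
    show "continuous_on {c..b} (\<lambda>x. exp (\<i> * k * complex_of_real (x - y)))"
      by (intro continuous_intros)
  qed
  then show ?thesis by (simp add: diff_divide_distrib)
qed

lemma Ep_FTC:
  fixes w :: "real \<Rightarrow> real" and k :: complex
  assumes w: "integrable lborel w" and k: "Im k > 0" and ab: "a \<le> b"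
  shows "((\<lambda>x. \<i> * k * Ep w k x + complex_of_real (w x)) has_integral (Ep w k b - Ep w k a)) {a..b}"
proof -
  have [measurable]: "w \<in> borel_measurable lborel" using w by auto
  have k0: "k \<noteq> 0" using k by auto
  define e where "e x y = exp (\<i> * k * complex_of_real (x - y))" for x y
  define P where "P x y = (if a \<le> x \<and> x \<le> b \<and> y < x then complex_of_real (w y) * e x y else 0)" for x y
  define W where "W = (\<integral>y. \<bar>w y\<bar> \<partial>lborel)"
  have Pmeas[measurable]: "case_prod P \<in> borel_measurable (lborel \<Otimes>\<^sub>M lborel)"
    unfolding P_def e_def by measurable
  have Pnorm: "norm (P x y) \<le> \<bar>w y\<bar>" for x y
  proof (cases "a \<le> x \<and> x \<le> b \<and> y < x")
    case True
    have "cmod (e x y) \<le> 1" unfolding e_def using exp_bound_le1[OF k, of "x-y"] True by simp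
    then show ?thesis using True by (simp add: P_def norm_mult mult_left_le)
  qed (auto simp: P_def)
  have Px: "P x = (\<lambda>y. if a \<le> x \<and> x \<le> b then (if y < x then complex_of_real (w y) * exp (\<i> * k * complex_of_real (x - y)) else 0) else 0)" for x
    by (auto simp: P_def e_def fun_eq_iff)
  have Pxint: "integrable lborel (P x)" for x
    unfolding Px using Ep_integrand_integrable[OF w k, of x] by (cases "a \<le> x \<and> x \<le> b") auto
  have Pint: "integrable (lborel \<Otimes>\<^sub>M lborel) (case_prod P)"
  proof (rule lborel_pair.Fubini_integrable)
    show "case_prod P \<in> borel_measurable (lborel \<Otimes>\<^sub>M lborel)" by (rule Pmeas)
    show "AE x in lborel. integrable lborel (\<lambda>y. case_prod P (x, y))"
      using Pxint by simp
    show "integrable lborel (\<lambda>x. \<integral>y. norm (case_prod P (x, y)) \<partial>lborel)"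
    proof (rule Bochner_Integration.integrable_bound[where f="\<lambda>x. indicator {a..b} x *\<^sub>R W"])
      show "integrable lborel (\<lambda>x. indicator {a..b} x *\<^sub>R W)"
        using borel_integrable_atLeastAtMost'[of a b "\<lambda>_. W"] unfolding set_integrable_def by simp
      show "(\<lambda>x. \<integral>y. norm (case_prod P (x, y)) \<partial>lborel) \<in> borel_measurable lborel"
        by measurable
      show "AE x in lborel. norm (\<integral>y. norm (case_prod P (x, y)) \<partial>lborel) \<le> norm (indicator {a..b} x *\<^sub>R W)"
      proof (intro AE_I2)
        fix x
        show "norm (\<integral>y. norm (case_prod P (x, y)) \<partial>lborel) \<le> norm (indicator {a..b} x *\<^sub>R W)"
        proof (cases "a \<le> x \<and> x \<le> b")
          case True
          have "(\<integral>y. norm (P x y) \<partial>lborel) \<le> W"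
            unfolding W_def using Pxint[of x] w by (intro integral_mono Pnorm) auto
          moreover have "0 \<le> (\<integral>y. norm (P x y) \<partial>lborel)" by simp
          moreover have "0 \<le> W" unfolding W_def by simp
          ultimately show ?thesis using True by (simp add: indicator_def)
        next
          case False
          then have "P x = (\<lambda>y. 0)" by (auto simp: P_def fun_eq_iff)
          then show ?thesis by simp
        qed
      qed
    qed
  qed
  have fub: "(\<integral>y. (\<integral>x. P x y \<partial>lborel) \<partial>lborel) = (\<integral>x. (\<integral>y. P x y \<partial>lborel) \<partial>lborel)"
    by (rule lborel_pair.Fubini_integral[OF Pint])
  have inner_x: "(\<integral>y. P x y \<partial>lborel) = indicator {a..b} x *\<^sub>R Ep w k x" for x
    unfolding Px Ep_def by (auto simp: indicator_def)
  define D where "D y = (if y < b then e b y else 0) - (if y < a then e a y else 0) - (if a \<le> y \<and> y < b then 1 else 0)" for y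
  have inner_y: "(\<integral>x. P x y \<partial>lborel) * (\<i> * k) = complex_of_real (w y) * D y" for y
  proof -
    define Q where "Q = (\<integral>x. (if a \<le> x \<and> x \<le> b \<and> y < x then e x y else 0) \<partial>lborel)"
    have "(\<integral>x. P x y \<partial>lborel) = complex_of_real (w y) * Q"
    proof -
      have "(\<lambda>x. P x y) = (\<lambda>x. complex_of_real (w y) * (if a \<le> x \<and> x \<le> b \<and> y < x then e x y else 0))"
        by (auto simp: P_def fun_eq_iff)
      then show ?thesis unfolding Q_def by simp
    qed
    moreover have "Q * (\<i> * k) = D y"
    proof (cases "y < a")
      case True
      have "Q = (\<integral>x. indicator {a..b} x *\<^sub>R e x y \<partial>lborel)"
        unfolding Q_def using True by (intro Bochner_Integration.integral_cong) (auto simp: indicator_def)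
      also have "\<dots> = (e b y - e a y) / (\<i> * k)"
        unfolding e_def by (rule exp_FTC[OF k0 ab])
      finally show ?thesis using True ab k0 by (simp add: D_def)
    next
      case False
      show ?thesis
      proof (cases "y < b")
        case True
        have "Q = (\<integral>x. indicator {y..b} x *\<^sub>R e x y \<partial>lborel)"
          unfolding Q_def
        proof (rule integral_cong_AE)
          show "(\<lambda>x. if a \<le> x \<and> x \<le> b \<and> y < x then e x y else 0) \<in> borel_measurable lborel"
            unfolding e_def by measurable
          show "(\<lambda>x. indicator {y..b} x *\<^sub>R e x y) \<in> borel_measurable lborel"
            unfolding e_def by measurable
          show "AE x in lborel. (if a \<le> x \<and> x \<le> b \<and> y < x then e x y else 0) = indicator {y..b} x *\<^sub>R e x y"
            using AE_lborel_singleton[of y] by eventually_elim (use False in \<open>auto simp: indicator_def\<close>)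
        qed
        also have "\<dots> = (e b y - e y y) / (\<i> * k)"
          unfolding e_def using True by (intro exp_FTC[OF k0]) simp
        finally show ?thesis using True False k0 by (simp add: D_def e_def)
      next
        case False2: False
        have "(\<lambda>x. if a \<le> x \<and> x \<le> b \<and> y < x then e x y else 0) = (\<lambda>x. 0)"
          using False2 by (auto simp: fun_eq_iff)
        then have "Q = 0" unfolding Q_def by simp
        then show ?thesis using False False2 by (simp add: D_def)
      qed
    qed
    ultimately show ?thesis by simp
  qed
  define LE where "LE = (\<integral>x. indicator {a..b} x *\<^sub>R Ep w k x \<partial>lborel)"
  have LE_eq: "LE * (\<i> * k) = (\<integral>y. complex_of_real (w y) * D y \<partial>lborel)"
  proof -
    have "LE * (\<i> * k) = (\<integral>y. (\<integral>x. P x y \<partial>lborel) \<partial>lborel) * (\<i> * k)"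
      unfolding LE_def fub inner_x ..
    also have "\<dots> = (\<integral>y. (\<integral>x. P x y \<partial>lborel) * (\<i> * k) \<partial>lborel)"
      by simp
    also have "\<dots> = (\<integral>y. complex_of_real (w y) * D y \<partial>lborel)"
      unfolding inner_y ..
    finally show ?thesis .
  qed
  define Wab where "Wab = (\<integral>y. (if a \<le> y \<and> y < b then complex_of_real (w y) else 0) \<partial>lborel)"
  have int1: "integrable lborel (\<lambda>y. if y < x then complex_of_real (w y) * e x y else 0)" for x
    unfolding e_def by (rule Ep_integrand_integrable[OF w k])
  have int3: "integrable lborel (\<lambda>y. if a \<le> y \<and> y < b then complex_of_real (w y) else 0)"
  proof -
    have "integrable lborel (\<lambda>y. indicator {a..<b} y *\<^sub>R complex_of_real (w y))"
      using w by (intro integrable_mult_indicator) auto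
    moreover have "(\<lambda>y. indicator {a..<b} y *\<^sub>R complex_of_real (w y)) = (\<lambda>y. if a \<le> y \<and> y < b then complex_of_real (w y) else 0)"
      by (auto simp: fun_eq_iff indicator_def)
    ultimately show ?thesis by simp
  qed
  have wD: "(\<integral>y. complex_of_real (w y) * D y \<partial>lborel) = Ep w k b - Ep w k a - Wab"
  proof -
    have "(\<lambda>y. complex_of_real (w y) * D y) = (\<lambda>y. (if y < b then complex_of_real (w y) * e b y else 0)
       - (if y < a then complex_of_real (w y) * e a y else 0) - (if a \<le> y \<and> y < b then complex_of_real (w y) else 0))"
      by (auto simp: D_def fun_eq_iff algebra_simps)
    then have "(\<integral>y. complex_of_real (w y) * D y \<partial>lborel) =
        (\<integral>y. (if y < b then complex_of_real (w y) * e b y else 0) \<partial>lborel)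
      - (\<integral>y. (if y < a then complex_of_real (w y) * e a y else 0) \<partial>lborel) - Wab"
      unfolding Wab_def using int1 int3 by (simp add: integral_diff)
    then show ?thesis unfolding Ep_def e_def by simp
  qed
  have hEp: "(Ep w k has_integral LE) {a..b}"
  proof -
    have si: "set_integrable lborel {a..b} (Ep w k)"
      unfolding set_integrable_def using Ep_L1[OF w k] by (intro integrable_mult_indicator) auto
    from set_borel_integral_eq_integral[OF si]
    show ?thesis unfolding LE_def set_lebesgue_integral_def by (simp add: integrable_integral)
  qed
  have hw: "((\<lambda>x. complex_of_real (w x)) has_integral Wab) {a..b}"
  proof -
    have si: "set_integrable lborel {a..b} (\<lambda>x. complex_of_real (w x))"
      unfolding set_integrable_def using w by (intro integrable_mult_indicator) auto
    have "Wab = (LINT x:{a..b}|lborel. complex_of_real (w x))"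
      unfolding Wab_def set_lebesgue_integral_def
    proof (rule integral_cong_AE)
      show "(\<lambda>y. if a \<le> y \<and> y < b then complex_of_real (w y) else 0) \<in> borel_measurable lborel" by measurable
      show "(\<lambda>x. indicator {a..b} x *\<^sub>R complex_of_real (w x)) \<in> borel_measurable lborel" by measurable
      show "AE x in lborel. (if a \<le> x \<and> x < b then complex_of_real (w x) else 0) = indicator {a..b} x *\<^sub>R complex_of_real (w x)"
        using AE_lborel_singleton[of b] by eventually_elim (auto simp: indicator_def)
    qed
    with set_borel_integral_eq_integral[OF si]
    show ?thesis by (simp add: integrable_integral)
  qed
  have "((\<lambda>x. \<i> * k * Ep w k x + complex_of_real (w x)) has_integral (\<i> * k * LE + Wab)) {a..b}"
    by (intro has_integral_add has_integral_mult_right hEp hw)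
  moreover have "\<i> * k * LE + Wab = Ep w k b - Ep w k a"
    using LE_eq wD by (simp add: algebra_simps)
  ultimately show ?thesis by simp
qed

definition Em :: "(real \<Rightarrow> real) \<Rightarrow> complex \<Rightarrow> real \<Rightarrow> complex" where
  "Em w k x = (\<integral>y. (if x < y then complex_of_real (w y) * exp (\<i> * k * complex_of_real (y - x)) else 0) \<partial>lborel)"

lemma Em_Ep: "Em w k x = Ep (\<lambda>y. w (-y)) k (-x)"
proof -
  have "Em w k x = (\<integral>y. (if x < 0 + -1 * y then complex_of_real (w (0 + -1 * y)) * exp (\<i> * k * complex_of_real ((0 + -1 * y) - x)) else 0) \<partial>lborel)"
    unfolding Em_def using lborel_integral_real_affine[of "-1" "\<lambda>y. (if x < y then complex_of_real (w y) * exp (\<i> * k * complex_of_real (y - x)) else 0)" 0]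
    by simp
  also have "\<dots> = Ep (\<lambda>y. w (-y)) k (-x)"
  proof -
    have h: "\<And>y. (0 + -1 * y - x) = (-x - y)" by simp
    show ?thesis unfolding Ep_def h by (intro Bochner_Integration.integral_cong) auto
  qed
  finally show ?thesis .
qed

context
  fixes w :: "real \<Rightarrow> real" and k :: complex
  assumes w: "integrable lborel w" and k: "Im k > 0"
begin

lemma wr: "integrable lborel (\<lambda>y. w (-y))"
  using lborel_integrable_real_affine[OF w, of "-1" 0] by simp

lemma Em_meas: "Em w k \<in> borel_measurable lborel"
  unfolding Em_Ep[abs_def] using Ep_meas[OF wr k] by measurable

lemma Em_L1: "integrable lborel (Em w k)"
  unfolding Em_Ep[abs_def] using lborel_integrable_real_affine[OF Ep_L1[OF wr k], of "-1" 0] by simp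

lemma Em_L2: "integrable lborel (\<lambda>x. (cmod (Em w k x))^2)"
  unfolding Em_Ep using lborel_integrable_real_affine[OF Ep_L2[OF wr k], of "-1" 0] by simp

lemma Em_bound: "cmod (Em w k x) \<le> (\<integral>y. \<bar>w (-y)\<bar> \<partial>lborel)"
  unfolding Em_Ep by (rule Ep_bound[OF wr k])

lemma Em_FTC:
  assumes ab: "a \<le> b"
  shows "((\<lambda>x. - \<i> * k * Em w k x - complex_of_real (w x)) has_integral (Em w k b - Em w k a)) {a..b}"
proof -
  have "((\<lambda>x. \<i> * k * Ep (\<lambda>y. w (-y)) k x + complex_of_real (w (-x))) has_integral
      (Ep (\<lambda>y. w (-y)) k (-a) - Ep (\<lambda>y. w (-y)) k (-b))) {-b..-a}"
    using ab by (intro Ep_FTC[OF wr k]) simp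
  then have "((\<lambda>x. \<i> * k * Em w k x + complex_of_real (w x)) has_integral (Em w k a - Em w k b)) {a..b}"
    unfolding Em_Ep by (subst has_integral_reflect_real[symmetric]) simp
  from has_integral_neg[OF this]
  have "((\<lambda>x. - (\<i> * k * Em w k x + complex_of_real (w x))) has_integral (Em w k b - Em w k a)) {a..b}"
    by simp
  moreover have "(\<lambda>x. - (\<i> * k * Em w k x + complex_of_real (w x))) = (\<lambda>x. - \<i> * k * Em w k x - complex_of_real (w x))"
    by (auto simp: fun_eq_iff)
  ultimately show ?thesis by simp
qed

end

lemma bl_smul: "bounded_linear (\<lambda>t::complex. t *s (c :: complex^'n))"
proof -
  have "linear (\<lambda>t::complex. t *s c)"
    by (rule linearI) (simp_all add: vec_eq_iff algebra_simps)
  then show ?thesis by (simp add: linear_conv_bounded_linear)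
qed

lemma integral_smul:
  fixes g :: "real \<Rightarrow> complex" and c :: "complex^'n"
  assumes "integrable M g"
  shows "(\<integral>y. g y *s c \<partial>M) = (\<integral>y. g y \<partial>M) *s c"
  using integral_bounded_linear[OF bl_smul assms] .

lemma integrable_smul:
  fixes g :: "'a \<Rightarrow> complex" and c :: "complex^'n"
  assumes "integrable M g"
  shows "integrable M (\<lambda>y. g y *s c)"
  using integrable_bounded_linear[OF bl_smul assms] .

lemma has_integral_smul:
  fixes g :: "real \<Rightarrow> complex" and c :: "complex^'n"
  assumes "(g has_integral I) S"
  shows "((\<lambda>x. g x *s c) has_integral I *s c) S"
  using has_integral_linear[OF assms bl_smul[of c]] by (simp add: comp_def)

lemma meas_smul:
  fixes g :: "'a \<Rightarrow> complex" and c :: "complex^'n"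
  assumes "g \<in> borel_measurable M"
  shows "(\<lambda>x. g x *s c) \<in> borel_measurable M"
proof -
  have "continuous_on UNIV (\<lambda>t::complex. t *s c)"
    by (rule linear_continuous_on[OF bl_smul])
  then show ?thesis using borel_measurable_continuous_on[OF _ assms] by blast
qed

lemma norm_smul_le:
  fixes t :: complex and c :: "complex^'n"
  shows "norm (t *s c) \<le> cmod t * (\<Sum>i\<in>UNIV. cmod (c $ i))"
proof -
  have "norm (t *s c) \<le> (\<Sum>i\<in>UNIV. cmod ((t *s c) $ i))" by (simp add: norm_vec_def L2_set_le_sum)
  also have "\<dots> = cmod t * (\<Sum>i\<in>UNIV. cmod (c $ i))"
    by (simp add: norm_mult sum_distrib_left)
  finally show ?thesis .
qed

lemma sqrt_up_props:
  assumes "\<not> (\<exists>r\<ge>0. w = complex_of_real r)"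
  shows "(sqrt_up w)^2 = w \<and> Im (sqrt_up w) > 0"
proof -
  define s where "s = (if Im (csqrt w) > 0 then csqrt w else - csqrt w)"
  have s2: "s^2 = w" unfolding s_def by auto
  have h: "Im (csqrt w) \<noteq> 0"
  proof
    assume "Im (csqrt w) = 0"
    then have "csqrt w = complex_of_real (Re (csqrt w))" by (simp add: complex_eq_iff)
    then have "w = complex_of_real ((Re (csqrt w))^2)"
      by (metis power2_csqrt of_real_power)
    then show False using assms zero_le_power2 by blast
  qed
  have sI: "Im s > 0"
  proof (cases "Im (csqrt w) > 0")
    case True
    then have "s = csqrt w" unfolding s_def by (rule if_P)
    then show ?thesis using True by simp
  next
    case False
    then have "s = - csqrt w" unfolding s_def by (rule if_not_P)
    then have "Im s = - Im (csqrt w)" by simp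
    then show ?thesis using False h by linarith
  qed
  have "sqrt_up w = s"
    unfolding sqrt_up_def
  proof (rule the_equality)
    show "s^2 = w \<and> Im s > 0" using s2 sI by simp
    fix t assume t: "t^2 = w \<and> Im t > 0"
    then have "(t - s) * (t + s) = 0" using s2 by (simp add: algebra_simps power2_eq_square)
    then have "t = s \<or> t = - s" by (auto simp: add_eq_0_iff)
    then show "t = s" using t sI by auto
  qed
  then show ?thesis using s2 sI by simp
qed

lemma spec_gap_not_nonneg:
  assumes "z \<in> spec_gap m"
  shows "\<not> (\<exists>r\<ge>0. z^2 - (complex_of_real m)^2 = complex_of_real r)"
proof
  assume "\<exists>r\<ge>0. z^2 - (complex_of_real m)^2 = complex_of_real r"
  then obtain r where r: "r \<ge> 0" "z^2 - (complex_of_real m)^2 = complex_of_real r" by blast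
  have re: "(Re z)^2 - (Im z)^2 = r + m^2"
    using arg_cong[OF r(2), of Re] by (simp add: power2_eq_square)
  have im: "Re z = 0 \<or> Im z = 0"
    using arg_cong[OF r(2), of Im] by (auto simp: power2_eq_square)
  have "Im z = 0"
  proof (rule ccontr)
    assume "Im z \<noteq> 0"
    then have "Re z = 0" using im by blast
    then have "-((Im z)^2) = r + m^2" using re by simp
    moreover have "(Im z)^2 > 0" using \<open>Im z \<noteq> 0\<close> by simp
    ultimately show False using r(1) by (smt (verit) zero_le_power2)
  qed
  then have zr: "z = complex_of_real (Re z)" by (simp add: complex_eq_iff)
  have "(Re z)^2 \<ge> m^2" using re r(1) \<open>Im z = 0\<close> by simp
  then have "\<bar>Re z\<bar> \<ge> \<bar>m\<bar>" by (simp add: abs_le_square_iff)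
  then have "Re z \<le> - \<bar>m\<bar> \<or> Re z \<ge> \<bar>m\<bar>" by linarith
  then show False using assms zr unfolding spec_gap_def by blast
qed

lemma spec_gap_zm:
  assumes "z \<in> spec_gap m"
  shows "z + complex_of_real m \<noteq> 0"
proof
  assume "z + complex_of_real m = 0"
  then have "z = complex_of_real (- m)" by (simp add: eq_neg_iff_add_eq_0)
  moreover have "- m \<le> - \<bar>m\<bar> \<or> - m \<ge> \<bar>m\<bar>" by linarith
  ultimately show False using assms unfolding spec_gap_def by blast
qed

lemma kk_props:
  assumes "z \<in> spec_gap m"
  shows "(kk m z)^2 = z^2 - (complex_of_real m)^2" "Im (kk m z) > 0"
  using sqrt_up_props[OF spec_gap_not_nonneg[OF assms]] unfolding kk_def by auto

lemma two_ne: "(1::2) \<noteq> 2" by simp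

lemma mv2: "(M *v (t::complex^2)) $ 1 = M$1$1 * t$1 + M$1$2 * t$2"
           "(M *v (t::complex^2)) $ 2 = M$2$1 * t$1 + M$2$2 * t$2"
  by (simp_all add: matrix_vector_mult_def sum_2)

lemma mm2: "((M::complex^2^2) ** N) $ i $ j = M$i$1 * N$1$j + M$i$2 * N$2$j"
  by (simp add: matrix_matrix_mult_def sum_2)

lemma mat_nth2: "(mat c :: complex^2^2) $ 1 $ 1 = c" "(mat c :: complex^2^2) $ 1 $ 2 = 0"
  "(mat c :: complex^2^2) $ 2 $ 1 = 0" "(mat c :: complex^2^2) $ 2 $ 2 = c"
  by (simp_all add: mat_def)

lemma sigma1_nth: "sigma1 $ 1 $ 1 = 0" "sigma1 $ 1 $ 2 = 1" "sigma1 $ 2 $ 1 = 1" "sigma1 $ 2 $ 2 = 0"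
  by (simp_all add: sigma1_def)

lemma sigma3_nth: "sigma3 $ 1 $ 1 = 1" "sigma3 $ 1 $ 2 = 0" "sigma3 $ 2 $ 1 = 0" "sigma3 $ 2 $ 2 = -1"
  by (simp_all add: sigma3_def)

lemma sigma0_nth: "sigma0 $ 1 $ 1 = 1" "sigma0 $ 1 $ 2 = 0" "sigma0 $ 2 $ 1 = 0" "sigma0 $ 2 $ 2 = 1"
  by (simp_all add: sigma0_def mat_def)

lemma ZZ_nth: "ZZ m z $ 1 $ 1 = zeta m z" "ZZ m z $ 1 $ 2 = 0" "ZZ m z $ 2 $ 1 = 0" "ZZ m z $ 2 $ 2 = inverse (zeta m z)"
  by (simp_all add: ZZ_def)

lemma vec2_eq: "(u::complex^2) = v \<longleftrightarrow> u$1 = v$1 \<and> u$2 = v$2"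
  by (simp add: vec_eq_iff forall_2)

lemma Em_integrand_integrable:
  fixes k :: complex assumes w: "integrable lborel w" and k: "Im k > 0"
  shows "integrable lborel (\<lambda>y. if x < y then complex_of_real (w y) * exp (\<i> * k * complex_of_real (y - x)) else 0)"
proof (rule Bochner_Integration.integrable_bound[where f="\<lambda>y. w y"])
  show "integrable lborel w" by fact
  have [measurable]: "w \<in> borel_measurable lborel" using w by auto
  show "(\<lambda>y. if x < y then complex_of_real (w y) * exp (\<i> * k * complex_of_real (y - x)) else 0) \<in> borel_measurable lborel"
    by measurable
  show "AE y in lborel. norm (if x < y then complex_of_real (w y) * exp (\<i> * k * complex_of_real (y - x)) else 0) \<le> norm (w y)"
  proof (intro AE_I2)
    fix y
    show "norm (if x < y then complex_of_real (w y) * exp (\<i> * k * complex_of_real (y - x)) else 0) \<le> norm (w y)"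
    proof (cases "x < y")
      case True
      have "cmod (exp (\<i> * k * complex_of_real (y - x))) \<le> 1" using exp_bound_le1[OF k, of "y-x"] True by simp
      then show ?thesis using True by (simp add: norm_mult mult_left_le)
    qed simp
  qed
qed

lemma scaleR_nth2: "(r *\<^sub>R (V :: complex^2)) $ i = complex_of_real r * V $ i"
  by (metis vector_scaleR_component scaleR_conv_of_real)

lemma cscaleR: "r *\<^sub>R (c::complex) = complex_of_real r * c"
  by (simp add: scaleR_conv_of_real)

lemma comp_eqs:
  fixes E1 E2 W t1 t2 \<zeta> k z m :: complex
  assumes h1: "\<zeta> * k = z + m" and h2: "k = (z - m) * \<zeta>" and h3: "\<zeta> \<noteq> 0"
  shows "- \<i> * (\<i>/2 * (\<i>*k*E1 + W) * (t1 + inverse \<zeta> * t2) + \<i>/2 * (-\<i>*k*E2 - W) * (- t1 + inverse \<zeta> * t2))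
         + m * (\<i>/2 * E1 * (\<zeta>*t1 + t2) + \<i>/2 * E2 * (\<zeta>*t1 - t2))
       = z * (\<i>/2 * E1 * (\<zeta>*t1 + t2) + \<i>/2 * E2 * (\<zeta>*t1 - t2)) + W * t1"
    and "- \<i> * (\<i>/2 * (\<i>*k*E1 + W) * (\<zeta>*t1 + t2) + \<i>/2 * (-\<i>*k*E2 - W) * (\<zeta>*t1 - t2))
         - m * (\<i>/2 * E1 * (t1 + inverse \<zeta> * t2) + \<i>/2 * E2 * (- t1 + inverse \<zeta> * t2))
       = z * (\<i>/2 * E1 * (t1 + inverse \<zeta> * t2) + \<i>/2 * E2 * (- t1 + inverse \<zeta> * t2)) + W * t2"
proof -
  have zm: "z - m = k / \<zeta>" using h2 h3 by (simp add: field_simps)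
  have z: "z = (\<zeta> * k + k / \<zeta>) / 2" using h1 zm by (simp add: field_simps)
  have m: "m = (\<zeta> * k - k / \<zeta>) / 2" using h1 zm by (simp add: field_simps)
  show "- \<i> * (\<i>/2 * (\<i>*k*E1 + W) * (t1 + inverse \<zeta> * t2) + \<i>/2 * (-\<i>*k*E2 - W) * (- t1 + inverse \<zeta> * t2))
         + m * (\<i>/2 * E1 * (\<zeta>*t1 + t2) + \<i>/2 * E2 * (\<zeta>*t1 - t2))
       = z * (\<i>/2 * E1 * (\<zeta>*t1 + t2) + \<i>/2 * E2 * (\<zeta>*t1 - t2)) + W * t1"
    unfolding z m using h3 by (simp add: field_simps)
  show "- \<i> * (\<i>/2 * (\<i>*k*E1 + W) * (\<zeta>*t1 + t2) + \<i>/2 * (-\<i>*k*E2 - W) * (\<zeta>*t1 - t2))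
         - m * (\<i>/2 * E1 * (t1 + inverse \<zeta> * t2) + \<i>/2 * E2 * (- t1 + inverse \<zeta> * t2))
       = z * (\<i>/2 * E1 * (t1 + inverse \<zeta> * t2) + \<i>/2 * E2 * (- t1 + inverse \<zeta> * t2)) + W * t2"
    unfolding z m using h3 by (simp add: field_simps)
qed

lemma sq_bound3:
  fixes n p q r :: real
  assumes "0 \<le> n" "n \<le> p + q + r" "0 \<le> p" "0 \<le> q" "0 \<le> r"
  shows "n^2 \<le> 3 * (p^2 + q^2 + r^2)"
proof -
  have "n^2 \<le> (p + q + r)^2" using assms by (intro power_mono) auto
  moreover have "3 * (p^2 + q^2 + r^2) - (p + q + r)^2 = (p - q)^2 + (q - r)^2 + (p - r)^2"
    by (simp add: power2_eq_square algebra_simps)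
  moreover have "(p - q)^2 + (q - r)^2 + (p - r)^2 \<ge> 0" by simp
  ultimately show ?thesis by linarith
qed

lemmas ent = mv2 mm2 mat_nth2 sigma1_nth sigma3_nth sigma0_nth ZZ_nth


locale setting =
  fixes m :: real and v :: "real \<Rightarrow> real" and \<epsilon> :: real and z :: complex
  assumes v_meas: "v \<in> borel_measurable lborel"
    and v_L1: "integrable lborel v"
    and v_L2: "integrable lborel (\<lambda>x. (v x)^2)"
    and v_int: "integral\<^sup>L lborel v = 1"
    and eps_pos: "\<epsilon> > 0"
    and z_in: "z \<in> spec_gap m"
begin

abbreviation "w \<equiv> v_eps v \<epsilon>"
abbreviation "k \<equiv> kk m z"
abbreviation "\<zeta> \<equiv> zeta m z"
abbreviation "av \<tau> \<equiv> (ZZ m z + sigma1) *v \<tau>"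
abbreviation "bv \<tau> \<equiv> (ZZ m z - sigma1) *v \<tau>"

lemma w_eq: "w = (\<lambda>x. (1/\<epsilon>) * v (0 + (1/\<epsilon>) * x))"
  by (auto simp: v_eps_def fun_eq_iff)

lemma w_int: "integrable lborel w"
proof -
  have "integrable lborel (\<lambda>x. v (0 + (1/\<epsilon>) * x))"
    using lborel_integrable_real_affine[OF v_L1, of "1/\<epsilon>" 0] eps_pos by simp
  then show ?thesis unfolding w_eq by (rule integrable_mult_right)
qed

lemma w_L2: "integrable lborel (\<lambda>x. (w x)^2)"
proof -
  have "integrable lborel (\<lambda>x. (v (0 + (1/\<epsilon>) * x))^2)"
    using lborel_integrable_real_affine[OF v_L2, of "1/\<epsilon>" 0] eps_pos by simp
  then have "integrable lborel (\<lambda>x. (1/\<epsilon>)^2 * (v (0 + (1/\<epsilon>) * x))^2)"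
    by (rule integrable_mult_right)
  moreover have "(\<lambda>x. (w x)^2) = (\<lambda>x. (1/\<epsilon>)^2 * (v (0 + (1/\<epsilon>) * x))^2)"
    unfolding w_eq by (simp add: power_mult_distrib fun_eq_iff power_divide)
  ultimately show ?thesis by simp
qed

lemma w_meas[measurable]: "w \<in> borel_measurable lborel"
  using w_int by auto

lemma w_one: "(\<integral>x. w x \<partial>lborel) = 1"
proof -
  have "(\<integral>x. v x \<partial>lborel) = \<bar>1/\<epsilon>\<bar> *\<^sub>R (\<integral>x. v (0 + (1/\<epsilon>) * x) \<partial>lborel)"
    using eps_pos by (intro lborel_integral_real_affine) simp
  also have "\<dots> = (\<integral>x. w x \<partial>lborel)"
    unfolding w_eq using eps_pos by simp
  finally show ?thesis using v_int by simp
qed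

lemma k_sq: "k^2 = z^2 - (complex_of_real m)^2" using kk_props(1)[OF z_in] .
lemma k_Im: "Im k > 0" using kk_props(2)[OF z_in] .
lemma k_ne: "k \<noteq> 0" using k_Im by auto
lemma zm_ne: "z + complex_of_real m \<noteq> 0" using spec_gap_zm[OF z_in] .
lemma zeta_ne: "\<zeta> \<noteq> 0" using zm_ne k_ne by (simp add: zeta_def)
lemma zeta_k: "\<zeta> * k = z + complex_of_real m" using k_ne by (simp add: zeta_def)
lemma k_zeta: "k = (z - complex_of_real m) * \<zeta>"
proof -
  have "(z - complex_of_real m) * \<zeta> * k = k * k"
    using zeta_k k_sq by (simp add: power2_eq_square algebra_simps)
  then show ?thesis using k_ne by simp
qed

lemma psi_formula:
  "psi_tau m v \<epsilon> z \<tau> x = (\<i>/2 * Ep w k x) *s av \<tau> + (\<i>/2 * Em w k x) *s bv \<tau>"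
proof -
  define gp where "gp y = (if y < x then complex_of_real (w y) * exp (\<i> * k * complex_of_real (x - y)) else 0)" for y
  define gm where "gm y = (if x < y then complex_of_real (w y) * exp (\<i> * k * complex_of_real (y - x)) else 0)" for y
  define G where "G y = (\<i>/2 * gp y) *s av \<tau> + (\<i>/2 * gm y) *s bv \<tau>" for y
  define F where "F y = w y *\<^sub>R (Rz m z x y *v \<tau>)" for y
  have gpi: "integrable lborel gp" unfolding gp_def by (rule Ep_integrand_integrable[OF w_int k_Im])
  have gmi: "integrable lborel gm"
    unfolding gm_def by (rule Em_integrand_integrable[OF w_int k_Im])
  have [measurable]: "gp \<in> borel_measurable lborel" "gm \<in> borel_measurable lborel"
    using gpi gmi by auto
  have Gm[measurable]: "G \<in> borel_measurable lborel"
    unfolding G_def by (intro borel_measurable_add meas_smul borel_measurable_times) auto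
  have FG: "F y = (if y = x then F x else G y)" for y
  proof (cases "y = x")
    case False
    then consider "y < x" | "x < y" by linarith
    then show ?thesis
    proof cases
      case 1
      then show ?thesis using False
        by (simp add: F_def G_def gp_def gm_def Rz_def vec2_eq ent two_ne scaleR_nth2 cscaleR algebra_simps)
    next
      case 2
      then show ?thesis using False
        by (simp add: F_def G_def gp_def gm_def Rz_def vec2_eq ent two_ne scaleR_nth2 cscaleR algebra_simps)
    qed
  qed simp
  have "psi_tau m v \<epsilon> z \<tau> x = (\<integral>y. (if y = x then F x else G y) \<partial>lborel)"
    unfolding psi_tau_def F_def[symmetric] by (subst FG) simp
  also have "\<dots> = (\<integral>y. G y \<partial>lborel)"
  proof (rule integral_cong_AE)
    show "(\<lambda>y. if y = x then F x else G y) \<in> borel_measurable lborel" by measurable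
    show "G \<in> borel_measurable lborel" by measurable
    show "AE y in lborel. (if y = x then F x else G y) = G y"
      using AE_lborel_singleton[of x] by eventually_elim auto
  qed
  also have "\<dots> = (\<integral>y. (\<i>/2 * gp y) *s av \<tau> \<partial>lborel) + (\<integral>y. (\<i>/2 * gm y) *s bv \<tau> \<partial>lborel)"
    unfolding G_def using gpi gmi by (intro Bochner_Integration.integral_add integrable_smul) auto
  also have "\<dots> = (\<i>/2 * Ep w k x) *s av \<tau> + (\<i>/2 * Em w k x) *s bv \<tau>"
    using gpi gmi by (simp add: integral_smul Ep_def Em_def gp_def[abs_def] gm_def[abs_def])
  finally show ?thesis .
qed


definition phi_tau :: "complex^2 \<Rightarrow> real \<Rightarrow> complex^2" where
  "phi_tau \<tau> x = (\<i>/2 * (\<i>*k*Ep w k x + complex_of_real (w x))) *s av \<tau>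
      + (\<i>/2 * (- \<i>*k*Em w k x - complex_of_real (w x))) *s bv \<tau>"

lemma psi_weak: "is_weak_deriv (psi_tau m v \<epsilon> z \<tau>) (phi_tau \<tau>)"
  unfolding is_weak_deriv_def
proof (intro allI impI)
  fix a b :: real assume ab: "a \<le> b"
  have "(phi_tau \<tau> has_integral ((\<i>/2 * (Ep w k b - Ep w k a)) *s av \<tau> + (\<i>/2 * (Em w k b - Em w k a)) *s bv \<tau>)) {a..b}"
    unfolding phi_tau_def
    by (intro has_integral_add has_integral_smul has_integral_mult_right Ep_FTC[OF w_int k_Im ab] Em_FTC[OF w_int k_Im ab])
  moreover have "(\<i>/2 * (Ep w k b - Ep w k a)) *s av \<tau> + (\<i>/2 * (Em w k b - Em w k a)) *s bv \<tau>
      = psi_tau m v \<epsilon> z \<tau> b - psi_tau m v \<epsilon> z \<tau> a"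
    unfolding psi_formula by (simp add: vec2_eq algebra_simps)
  ultimately show "(phi_tau \<tau> has_integral psi_tau m v \<epsilon> z \<tau> b - psi_tau m v \<epsilon> z \<tau> a) {a..b}" by simp
qed

lemma Ep_meas': "Ep w k \<in> borel_measurable lborel" by (rule Ep_meas[OF w_int k_Im])
lemma Em_meas': "Em w k \<in> borel_measurable lborel" by (rule Em_meas[OF w_int k_Im])

lemma psi_meas: "psi_tau m v \<epsilon> z \<tau> \<in> borel_measurable lborel"
proof -
  note Ep_meas'[measurable] Em_meas'[measurable]
  show ?thesis unfolding psi_formula[abs_def]
    by (intro borel_measurable_add meas_smul borel_measurable_times) auto
qed

lemma phi_meas: "phi_tau \<tau> \<in> borel_measurable lborel"
proof -
  note Ep_meas'[measurable] Em_meas'[measurable]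
  show ?thesis unfolding phi_tau_def[abs_def]
    by (intro borel_measurable_add meas_smul borel_measurable_times) auto
qed

lemma psi_L2: "L2 (psi_tau m v \<epsilon> z \<tau>)"
  unfolding L2_def
proof
  show "psi_tau m v \<epsilon> z \<tau> \<in> borel_measurable lborel" by (rule psi_meas)
  define B where "B = (\<Sum>i\<in>UNIV. cmod (av \<tau> $ i)) + (\<Sum>i\<in>UNIV. cmod (bv \<tau> $ i))"
  have B0: "0 \<le> B" unfolding B_def by (intro add_nonneg_nonneg sum_nonneg) auto
  define f where "f x = 3 * ((cmod (Ep w k x) * B)^2 + (cmod (Em w k x) * B)^2 + 0^2)" for x
  show "integrable lborel (\<lambda>x. (norm (psi_tau m v \<epsilon> z \<tau> x))^2)"
  proof (rule Bochner_Integration.integrable_bound[where f=f])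
    show "integrable lborel f"
      unfolding f_def using Ep_L2[OF w_int k_Im] Em_L2[OF w_int k_Im] by (simp add: power_mult_distrib)
    show "(\<lambda>x. (norm (psi_tau m v \<epsilon> z \<tau> x))^2) \<in> borel_measurable lborel"
      using psi_meas by measurable
    show "AE x in lborel. norm ((norm (psi_tau m v \<epsilon> z \<tau> x))^2) \<le> norm (f x)"
    proof (intro AE_I2)
      fix x
      have "norm (psi_tau m v \<epsilon> z \<tau> x) \<le> norm ((\<i>/2 * Ep w k x) *s av \<tau>) + norm ((\<i>/2 * Em w k x) *s bv \<tau>)"
        unfolding psi_formula by (rule norm_triangle_ineq)
      also have "\<dots> \<le> cmod (\<i>/2 * Ep w k x) * (\<Sum>i\<in>UNIV. cmod (av \<tau> $ i)) + cmod (\<i>/2 * Em w k x) * (\<Sum>i\<in>UNIV. cmod (bv \<tau> $ i))"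
        by (intro add_mono norm_smul_le)
      also have "\<dots> \<le> cmod (Ep w k x) * B + cmod (Em w k x) * B"
        unfolding B_def by (intro add_mono mult_mono) (auto simp: norm_mult intro: sum_nonneg)
      finally have "(norm (psi_tau m v \<epsilon> z \<tau> x))^2 \<le> f x"
        unfolding f_def using B0 by (intro sq_bound3) auto
      then show "norm ((norm (psi_tau m v \<epsilon> z \<tau> x))^2) \<le> norm (f x)"
        by simp
    qed
  qed
qed

lemma phi_L2: "L2 (phi_tau \<tau>)"
  unfolding L2_def
proof
  show "phi_tau \<tau> \<in> borel_measurable lborel" by (rule phi_meas)
  define B where "B = (\<Sum>i\<in>UNIV. cmod (av \<tau> $ i)) + (\<Sum>i\<in>UNIV. cmod (bv \<tau> $ i))"
  have B0: "0 \<le> B" unfolding B_def by (intro add_nonneg_nonneg sum_nonneg) auto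
  define f where "f x = 3 * ((B * cmod k * cmod (Ep w k x))^2 + (B * cmod k * cmod (Em w k x))^2 + (2 * B * \<bar>w x\<bar>)^2)" for x
  show "integrable lborel (\<lambda>x. (norm (phi_tau \<tau> x))^2)"
  proof (rule Bochner_Integration.integrable_bound[where f=f])
    show "integrable lborel f"
      unfolding f_def using Ep_L2[OF w_int k_Im] Em_L2[OF w_int k_Im] w_L2
      by (simp add: power_mult_distrib)
    show "(\<lambda>x. (norm (phi_tau \<tau> x))^2) \<in> borel_measurable lborel"
      using phi_meas by measurable
    show "AE x in lborel. norm ((norm (phi_tau \<tau> x))^2) \<le> norm (f x)"
    proof (intro AE_I2)
      fix x
      have n1: "cmod (\<i>/2 * (\<i>*k*Ep w k x + complex_of_real (w x))) \<le> cmod k * cmod (Ep w k x) + \<bar>w x\<bar>"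
      proof -
        have "cmod (\<i>/2 * (\<i>*k*Ep w k x + complex_of_real (w x))) \<le> cmod (\<i>*k*Ep w k x + complex_of_real (w x))"
          by (simp add: norm_mult)
        also have "\<dots> \<le> cmod (\<i>*k*Ep w k x) + cmod (complex_of_real (w x))" by (rule norm_triangle_ineq)
        finally show ?thesis by (simp add: norm_mult)
      qed
      have n2: "cmod (\<i>/2 * (- \<i>*k*Em w k x - complex_of_real (w x))) \<le> cmod k * cmod (Em w k x) + \<bar>w x\<bar>"
      proof -
        have "cmod (\<i>/2 * (- \<i>*k*Em w k x - complex_of_real (w x))) \<le> cmod (- \<i>*k*Em w k x - complex_of_real (w x))"
          by (simp add: norm_mult)
        also have "\<dots> \<le> cmod (- \<i>*k*Em w k x) + cmod (complex_of_real (w x))" by (rule norm_triangle_ineq4)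
        finally show ?thesis by (simp add: norm_mult)
      qed
      have "norm (phi_tau \<tau> x) \<le> norm ((\<i>/2 * (\<i>*k*Ep w k x + complex_of_real (w x))) *s av \<tau>)
          + norm ((\<i>/2 * (- \<i>*k*Em w k x - complex_of_real (w x))) *s bv \<tau>)"
        unfolding phi_tau_def by (rule norm_triangle_ineq)
      also have "\<dots> \<le> cmod (\<i>/2 * (\<i>*k*Ep w k x + complex_of_real (w x))) * (\<Sum>i\<in>UNIV. cmod (av \<tau> $ i))
          + cmod (\<i>/2 * (- \<i>*k*Em w k x - complex_of_real (w x))) * (\<Sum>i\<in>UNIV. cmod (bv \<tau> $ i))"
        by (intro add_mono norm_smul_le)
      also have "\<dots> \<le> (cmod k * cmod (Ep w k x) + \<bar>w x\<bar>) * B + (cmod k * cmod (Em w k x) + \<bar>w x\<bar>) * B"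
        unfolding B_def by (intro add_mono mult_mono n1 n2) (auto intro: sum_nonneg)
      also have "\<dots> = B * cmod k * cmod (Ep w k x) + B * cmod k * cmod (Em w k x) + 2 * B * \<bar>w x\<bar>"
        by (simp add: algebra_simps)
      finally have "(norm (phi_tau \<tau> x))^2 \<le> f x"
        unfolding f_def using B0 by (intro sq_bound3) auto
      then show "norm ((norm (phi_tau \<tau> x))^2) \<le> norm (f x)"
        by simp
    qed
  qed
qed

lemma D0_eq:
  "(- \<i>) *s (sigma1 *v phi_tau \<tau> x) + complex_of_real m *s (sigma3 *v psi_tau m v \<epsilon> z \<tau> x)
    = z *s psi_tau m v \<epsilon> z \<tau> x + w x *\<^sub>R \<tau>"
proof -
  define E1 where "E1 = Ep w k x"
  define E2 where "E2 = Em w k x"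
  define W where "W = complex_of_real (w x)"
  define t1 where "t1 = \<tau>$1"
  define t2 where "t2 = \<tau>$2"
  note c = comp_eqs[OF zeta_k k_zeta zeta_ne, of E1 W t1 t2 E2]
  have p1: "psi_tau m v \<epsilon> z \<tau> x $ 1 = \<i>/2 * E1 * (\<zeta>*t1 + t2) + \<i>/2 * E2 * (\<zeta>*t1 - t2)"
    unfolding psi_formula E1_def E2_def t1_def t2_def by (simp add: ent two_ne)
  have p2: "psi_tau m v \<epsilon> z \<tau> x $ 2 = \<i>/2 * E1 * (t1 + inverse \<zeta> * t2) + \<i>/2 * E2 * (- t1 + inverse \<zeta> * t2)"
    unfolding psi_formula E1_def E2_def t1_def t2_def by (simp add: ent two_ne)
  have f1: "phi_tau \<tau> x $ 1 = \<i>/2 * (\<i>*k*E1 + W) * (\<zeta>*t1 + t2) + \<i>/2 * (-\<i>*k*E2 - W) * (\<zeta>*t1 - t2)"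
    unfolding phi_tau_def E1_def E2_def t1_def t2_def W_def by (simp add: ent two_ne)
  have f2: "phi_tau \<tau> x $ 2 = \<i>/2 * (\<i>*k*E1 + W) * (t1 + inverse \<zeta> * t2) + \<i>/2 * (-\<i>*k*E2 - W) * (- t1 + inverse \<zeta> * t2)"
    unfolding phi_tau_def E1_def E2_def t1_def t2_def W_def by (simp add: ent two_ne)
  have "((- \<i>) *s (sigma1 *v phi_tau \<tau> x) + complex_of_real m *s (sigma3 *v psi_tau m v \<epsilon> z \<tau> x)) $ 1
      = - \<i> * phi_tau \<tau> x $ 2 + complex_of_real m * psi_tau m v \<epsilon> z \<tau> x $ 1"
    by (simp add: ent)
  also have "\<dots> = (z *s psi_tau m v \<epsilon> z \<tau> x + w x *\<^sub>R \<tau>) $ 1"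
    using c(1) by (simp add: f2 p1 scaleR_nth2 cscaleR W_def t1_def)
  finally have q1: "((- \<i>) *s (sigma1 *v phi_tau \<tau> x) + complex_of_real m *s (sigma3 *v psi_tau m v \<epsilon> z \<tau> x)) $ 1
      = (z *s psi_tau m v \<epsilon> z \<tau> x + w x *\<^sub>R \<tau>) $ 1" .
  have "((- \<i>) *s (sigma1 *v phi_tau \<tau> x) + complex_of_real m *s (sigma3 *v psi_tau m v \<epsilon> z \<tau> x)) $ 2
      = - \<i> * phi_tau \<tau> x $ 1 - complex_of_real m * psi_tau m v \<epsilon> z \<tau> x $ 2"
    by (simp add: ent)
  also have "\<dots> = (z *s psi_tau m v \<epsilon> z \<tau> x + w x *\<^sub>R \<tau>) $ 2"
    using c(2) by (simp add: f1 p2 scaleR_nth2 cscaleR W_def t2_def)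
  finally have q2: "((- \<i>) *s (sigma1 *v phi_tau \<tau> x) + complex_of_real m *s (sigma3 *v psi_tau m v \<epsilon> z \<tau> x)) $ 2
      = (z *s psi_tau m v \<epsilon> z \<tau> x + w x *\<^sub>R \<tau>) $ 2" .
  show ?thesis using q1 q2 unfolding vec2_eq by simp
qed

end

lemma halfline_infinite:
  fixes S :: "real set"
  assumes "S = {0..} \<or> S = {..0}"
  shows "\<not> emeasure lborel S < \<infinity>"
proof
  assume fin: "emeasure lborel S < \<infinity>"
  define e where "e = enn2real (emeasure lborel S)"
  have Se: "emeasure lborel S = ennreal e" unfolding e_def using fin by (simp add: ennreal_enn2real_if)
  obtain n :: nat where n: "e < real n" using reals_Archimedean2 by blast
  have "emeasure lborel (if S = {0..} then {0..real n} else {- real n..0}) \<le> emeasure lborel S"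
    using assms by (intro emeasure_mono) auto
  also have "emeasure lborel (if S = {0..} then {0..real n} else {- real n..0}) = ennreal (real n)"
    by auto
  finally have "ennreal (real n) \<le> ennreal e" using Se by simp
  moreover have "0 \<le> e" unfolding e_def by simp
  ultimately have "real n \<le> e" by (simp add: ennreal_le_iff)
  then show False using n by simp
qed

lemma not_L2_exp:
  fixes c l :: complex
  assumes l: "Re l \<noteq> 0" and int: "integrable lborel (\<lambda>x::real. (cmod (c * exp (l * complex_of_real x)))^2)"
  shows "c = 0"
proof (rule ccontr)
  assume c0: "c \<noteq> 0"
  define S :: "real set" where "S = (if Re l > 0 then {0..} else {..0})"
  have S: "S = {0..} \<or> S = {..0}" unfolding S_def by auto
  have bnd: "(cmod c)^2 \<le> (cmod (c * exp (l * complex_of_real x)))^2" if "x \<in> S" for x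
  proof -
    have "0 \<le> Re l * x" using that l unfolding S_def by (auto split: if_splits intro: mult_nonneg_nonneg mult_nonpos_nonpos)
    then have "1 \<le> exp (Re l * x)" by simp
    then have "cmod c \<le> cmod c * exp (Re l * x)" by (simp add: mult_le_cancel_left1)
    then show ?thesis by (simp add: norm_mult norm_exp_eq_Re power_mono)
  qed
  have "integrable lborel (\<lambda>x. indicator S x *\<^sub>R (cmod c)^2)"
  proof (rule Bochner_Integration.integrable_bound[OF int])
    show "(\<lambda>x. indicator S x *\<^sub>R (cmod c)\<^sup>2) \<in> borel_measurable lborel"
      using S by auto
    show "AE x in lborel. norm (indicator S x *\<^sub>R (cmod c)\<^sup>2) \<le> norm ((cmod (c * exp (l * complex_of_real x)))\<^sup>2)"
      using bnd by (intro AE_I2) (auto simp: indicator_def)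
  qed
  then have "integrable lborel (\<lambda>x. (1 / (cmod c)^2) * (indicator S x *\<^sub>R (cmod c)^2))"
    by (rule integrable_mult_right)
  moreover have "(\<lambda>x. (1 / (cmod c)^2) * (indicator S x *\<^sub>R (cmod c)^2)) = indicator S"
    using c0 by (auto simp: fun_eq_iff indicator_def)
  ultimately have "integrable lborel (indicator S :: real \<Rightarrow> real)" by simp
  then have "emeasure lborel S < \<infinity>" by (simp add: integrable_indicator_iff)
  then show False using halfline_infinite[OF S] by simp
qed

lemma ode_exp:
  fixes f :: "real \<Rightarrow> complex" and l :: complex
  assumes hi: "\<And>a b. a \<le> b \<Longrightarrow> ((\<lambda>x. l * f x) has_integral (f b - f a)) {a..b}"
  shows "f x = f 0 * exp (l * complex_of_real x)"
proof -
  have rep: "f t = f a + integral {a..t} (\<lambda>x. l * f x)" if "a \<le> t" for a t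
    using integral_unique[OF hi[OF that]] by simp
  have intg: "(\<lambda>x. l * f x) integrable_on {a..b}" if "a \<le> b" for a b
    using hi[OF that] by blast
  have cont_ab: "continuous_on {a..b} f" if "a \<le> b" for a b
  proof -
    have "continuous_on {a..b} (\<lambda>t. f a + integral {a..t} (\<lambda>x. l * f x))"
      by (intro continuous_intros indefinite_integral_continuous_1 intg that)
    then show ?thesis by (rule continuous_on_eq) (metis atLeastAtMost_iff rep)
  qed
  have der: "(f has_vector_derivative l * f t) (at t)" for t
  proof -
    have c: "continuous_on {t-1..t+1} (\<lambda>x. l * f x)"
      by (intro continuous_intros cont_ab) simp
    have "((\<lambda>u. integral {t-1..u} (\<lambda>x. l * f x)) has_vector_derivative l * f t) (at t within {t-1..t+1})"
      by (rule integral_has_vector_derivative[OF c]) simp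
    then have "((\<lambda>u. integral {t-1..u} (\<lambda>x. l * f x) + f (t-1)) has_vector_derivative l * f t) (at t within {t-1..t+1})"
      by (simp add: has_vector_derivative_add_const)
    then have "(f has_vector_derivative l * f t) (at t within {t-1..t+1})"
      by (rule has_vector_derivative_transform[rotated 2]) (auto simp: rep)
    moreover have "at t within {t-1..t+1} = at t" by (intro at_within_interior) simp
    ultimately show ?thesis by metis
  qed
  define g where "g t = f t * exp (- l * complex_of_real t)" for t
  have gder: "(g has_vector_derivative 0) (at t within UNIV)" for t
  proof -
    have "((\<lambda>u. exp (- l * u)) has_field_derivative (- l * exp (- l * complex_of_real t))) (at (complex_of_real t))"
      by (auto intro!: derivative_eq_intros)
    from has_vector_derivative_real_field[OF this]
    have e: "((\<lambda>x. exp (- l * complex_of_real x)) has_vector_derivative (- l * exp (- l * complex_of_real t))) (at t)" .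
    from has_vector_derivative_mult[OF der e]
    show ?thesis unfolding g_def by (simp add: algebra_simps)
  qed
  obtain C where C: "\<And>t. t \<in> UNIV \<Longrightarrow> g t = C"
    using has_vector_derivative_zero_constant[of UNIV g] gder by blast
  have "g x = g 0" using C by simp
  then have "f x * exp (- l * complex_of_real x) = f 0" unfolding g_def by simp
  then have "f x * exp (- l * complex_of_real x) * exp (l * complex_of_real x) = f 0 * exp (l * complex_of_real x)"
    by simp
  then show ?thesis by (simp add: mult.assoc exp_add[symmetric])
qed

context setting
begin

lemma Wnn: "0 \<le> (\<integral>y. \<bar>w y\<bar> \<partial>lborel)" by simp

lemma wEp_int: "integrable lborel (\<lambda>x. complex_of_real (w x) * Ep w k x)"
proof (rule Bochner_Integration.integrable_bound[where f="\<lambda>x. (\<integral>y. \<bar>w y\<bar> \<partial>lborel) * w x"])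
  show "integrable lborel (\<lambda>x. (\<integral>y. \<bar>w y\<bar> \<partial>lborel) * w x)" using w_int by auto
  note Ep_meas'[measurable]
  show "(\<lambda>x. complex_of_real (w x) * Ep w k x) \<in> borel_measurable lborel" by measurable
  show "AE x in lborel. norm (complex_of_real (w x) * Ep w k x) \<le> norm ((\<integral>y. \<bar>w y\<bar> \<partial>lborel) * w x)"
  proof (intro AE_I2)
    fix x
    have "norm (complex_of_real (w x) * Ep w k x) = \<bar>w x\<bar> * cmod (Ep w k x)" by (simp add: norm_mult)
    also have "\<dots> \<le> \<bar>w x\<bar> * (\<integral>y. \<bar>w y\<bar> \<partial>lborel)"
      by (intro mult_left_mono Ep_bound[OF w_int k_Im]) auto
    also have "\<dots> = norm ((\<integral>y. \<bar>w y\<bar> \<partial>lborel) * w x)" using Wnn by (simp add: abs_mult)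
    finally show "norm (complex_of_real (w x) * Ep w k x) \<le> norm ((\<integral>y. \<bar>w y\<bar> \<partial>lborel) * w x)" .
  qed
qed

lemma wEm_int: "integrable lborel (\<lambda>x. complex_of_real (w x) * Em w k x)"
proof (rule Bochner_Integration.integrable_bound[where f="\<lambda>x. (\<integral>y. \<bar>w (-y)\<bar> \<partial>lborel) * w x"])
  show "integrable lborel (\<lambda>x. (\<integral>y. \<bar>w (-y)\<bar> \<partial>lborel) * w x)" using w_int by auto
  note Em_meas'[measurable]
  show "(\<lambda>x. complex_of_real (w x) * Em w k x) \<in> borel_measurable lborel" by measurable
  show "AE x in lborel. norm (complex_of_real (w x) * Em w k x) \<le> norm ((\<integral>y. \<bar>w (-y)\<bar> \<partial>lborel) * w x)"
  proof (intro AE_I2)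
    fix x
    have "norm (complex_of_real (w x) * Em w k x) = \<bar>w x\<bar> * cmod (Em w k x)" by (simp add: norm_mult)
    also have "\<dots> \<le> \<bar>w x\<bar> * (\<integral>y. \<bar>w (-y)\<bar> \<partial>lborel)"
      by (intro mult_left_mono Em_bound[OF w_int k_Im]) auto
    also have "\<dots> = norm ((\<integral>y. \<bar>w (-y)\<bar> \<partial>lborel) * w x)" by (simp add: abs_mult)
    finally show "norm (complex_of_real (w x) * Em w k x) \<le> norm ((\<integral>y. \<bar>w (-y)\<bar> \<partial>lborel) * w x)" .
  qed
qed

lemma IpIm: "(\<integral>x. complex_of_real (w x) * Ep w k x \<partial>lborel) = (\<integral>x. complex_of_real (w x) * Em w k x \<partial>lborel)"
proof -
  define P where "P x y = (if y < x then complex_of_real (w x) * (complex_of_real (w y) * exp (\<i> * k * complex_of_real (x - y))) else 0)" for x y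
  have Pm[measurable]: "case_prod P \<in> borel_measurable (lborel \<Otimes>\<^sub>M lborel)"
    unfolding P_def by measurable
  have Px: "(\<lambda>y. P x y) = (\<lambda>y. complex_of_real (w x) * (if y < x then complex_of_real (w y) * exp (\<i> * k * complex_of_real (x - y)) else 0))" for x
    by (auto simp: P_def fun_eq_iff)
  have Py: "(\<lambda>x. P x y) = (\<lambda>x. complex_of_real (w y) * (if y < x then complex_of_real (w x) * exp (\<i> * k * complex_of_real (x - y)) else 0))" for y
    by (auto simp: P_def fun_eq_iff)
  have P1: "(\<integral>y. P x y \<partial>lborel) = complex_of_real (w x) * Ep w k x" for x
    unfolding Px Ep_def by simp
  have P2: "(\<integral>x. P x y \<partial>lborel) = complex_of_real (w y) * Em w k y" for y
    unfolding Py Em_def by simp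
  have Pint: "integrable (lborel \<Otimes>\<^sub>M lborel) (case_prod P)"
  proof (rule lborel_pair.Fubini_integrable)
    show "case_prod P \<in> borel_measurable (lborel \<Otimes>\<^sub>M lborel)" by (rule Pm)
    show "AE x in lborel. integrable lborel (\<lambda>y. case_prod P (x, y))"
      using Ep_integrand_integrable[OF w_int k_Im] by (simp add: Px)
    show "integrable lborel (\<lambda>x. \<integral>y. norm (case_prod P (x, y)) \<partial>lborel)"
    proof (rule Bochner_Integration.integrable_bound[where f="\<lambda>x. (\<integral>y. \<bar>w y\<bar> \<partial>lborel) * w x"])
      show "integrable lborel (\<lambda>x. (\<integral>y. \<bar>w y\<bar> \<partial>lborel) * w x)" using w_int by auto
      show "(\<lambda>x. \<integral>y. norm (case_prod P (x, y)) \<partial>lborel) \<in> borel_measurable lborel" by measurable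
      show "AE x in lborel. norm (\<integral>y. norm (case_prod P (x, y)) \<partial>lborel) \<le> norm ((\<integral>y. \<bar>w y\<bar> \<partial>lborel) * w x)"
      proof (intro AE_I2)
        fix x
        have nb: "norm (P x y) \<le> \<bar>w x\<bar> * \<bar>w y\<bar>" for y
        proof (cases "y < x")
          case True
          have "cmod (exp (\<i> * k * complex_of_real (x - y))) \<le> 1"
            using exp_bound_le1[OF k_Im, of "x-y"] True by simp
          then have "\<bar>w y\<bar> * cmod (exp (\<i> * k * complex_of_real (x - y))) \<le> \<bar>w y\<bar>"
            by (simp add: mult_left_le)
          then show ?thesis using True by (simp add: P_def norm_mult mult_left_mono)
        qed (simp add: P_def)
        have "(\<integral>y. norm (P x y) \<partial>lborel) \<le> (\<integral>y. \<bar>w x\<bar> * \<bar>w y\<bar> \<partial>lborel)"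
          using Ep_integrand_integrable[OF w_int k_Im, of x] w_int
          by (intro integral_mono nb) (auto simp: Px)
        also have "\<dots> = \<bar>w x\<bar> * (\<integral>y. \<bar>w y\<bar> \<partial>lborel)" by simp
        finally show "norm (\<integral>y. norm (case_prod P (x, y)) \<partial>lborel) \<le> norm ((\<integral>y. \<bar>w y\<bar> \<partial>lborel) * w x)"
          using Wnn by (simp add: abs_mult mult.commute)
      qed
    qed
  qed
  have "(\<integral>x. complex_of_real (w x) * Ep w k x \<partial>lborel) = (\<integral>x. (\<integral>y. P x y \<partial>lborel) \<partial>lborel)"
    unfolding P1 ..
  also have "\<dots> = (\<integral>y. (\<integral>x. P x y \<partial>lborel) \<partial>lborel)"
    by (rule lborel_pair.Fubini_integral[OF Pint, symmetric])
  also have "\<dots> = (\<integral>y. complex_of_real (w y) * Em w k y \<partial>lborel)"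
    unfolding P2 ..
  finally show ?thesis .
qed


lemma EH: "Ep w k x + Em w k x = (\<integral>y. complex_of_real (w y) * exp (\<i> * k * complex_of_real \<bar>x - y\<bar>) \<partial>lborel)"
proof -
  have "Ep w k x + Em w k x = (\<integral>y. (if y < x then complex_of_real (w y) * exp (\<i> * k * complex_of_real (x - y)) else 0)
      + (if x < y then complex_of_real (w y) * exp (\<i> * k * complex_of_real (y - x)) else 0) \<partial>lborel)"
    unfolding Ep_def Em_def
    by (rule Bochner_Integration.integral_add[symmetric] Ep_integrand_integrable[OF w_int k_Im] Em_integrand_integrable[OF w_int k_Im])+
  also have "\<dots> = (\<integral>y. complex_of_real (w y) * exp (\<i> * k * complex_of_real \<bar>x - y\<bar>) \<partial>lborel)"
  proof (rule integral_cong_AE)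
    show "(\<lambda>y. (if y < x then complex_of_real (w y) * exp (\<i> * k * complex_of_real (x - y)) else 0)
      + (if x < y then complex_of_real (w y) * exp (\<i> * k * complex_of_real (y - x)) else 0)) \<in> borel_measurable lborel"
      by measurable
    show "(\<lambda>y. complex_of_real (w y) * exp (\<i> * k * complex_of_real \<bar>x - y\<bar>)) \<in> borel_measurable lborel"
      by measurable
    show "AE y in lborel. (if y < x then complex_of_real (w y) * exp (\<i> * k * complex_of_real (x - y)) else 0)
      + (if x < y then complex_of_real (w y) * exp (\<i> * k * complex_of_real (y - x)) else 0)
      = complex_of_real (w y) * exp (\<i> * k * complex_of_real \<bar>x - y\<bar>)"
      using AE_lborel_singleton[of x] by eventually_elim auto
  qed
  finally show ?thesis .
qed

lemma H_scale:
  "(\<integral>y. complex_of_real (w y) * exp (\<i> * k * complex_of_real \<bar>\<epsilon> * s - y\<bar>) \<partial>lborel)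
   = (\<integral>t. complex_of_real (v t) * exp (\<i> * (complex_of_real \<epsilon> * k) * complex_of_real \<bar>s - t\<bar>) \<partial>lborel)"
proof -
  have e0: "\<epsilon> \<noteq> 0" using eps_pos by simp
  have "(\<integral>y. complex_of_real (w y) * exp (\<i> * k * complex_of_real \<bar>\<epsilon> * s - y\<bar>) \<partial>lborel)
     = \<bar>\<epsilon>\<bar> *\<^sub>R (\<integral>t. complex_of_real (w (0 + \<epsilon> * t)) * exp (\<i> * k * complex_of_real \<bar>\<epsilon> * s - (0 + \<epsilon> * t)\<bar>) \<partial>lborel)"
    by (rule lborel_integral_real_affine[OF e0])
  also have "\<dots> = (\<integral>t. \<epsilon> *\<^sub>R (complex_of_real (w (0 + \<epsilon> * t)) * exp (\<i> * k * complex_of_real \<bar>\<epsilon> * s - (0 + \<epsilon> * t)\<bar>)) \<partial>lborel)"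
    using eps_pos by simp
  also have "\<dots> = (\<integral>t. complex_of_real (v t) * exp (\<i> * (complex_of_real \<epsilon> * k) * complex_of_real \<bar>s - t\<bar>) \<partial>lborel)"
  proof (rule Bochner_Integration.integral_cong[OF refl])
    fix t
    have a: "\<bar>\<epsilon> * s - (0 + \<epsilon> * t)\<bar> = \<epsilon> * \<bar>s - t\<bar>"
      using eps_pos by (simp add: right_diff_distrib[symmetric] abs_mult)
    have b: "w (0 + \<epsilon> * t) = v t / \<epsilon>" using e0 by (simp add: v_eps_def)
    show "\<epsilon> *\<^sub>R (complex_of_real (w (0 + \<epsilon> * t)) * exp (\<i> * k * complex_of_real \<bar>\<epsilon> * s - (0 + \<epsilon> * t)\<bar>))
      = complex_of_real (v t) * exp (\<i> * (complex_of_real \<epsilon> * k) * complex_of_real \<bar>s - t\<bar>)"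
      unfolding a b using e0 by (simp add: cscaleR mult_ac)
  qed
  finally show ?thesis .
qed

lemma alpha_sum:
  "(\<integral>x. complex_of_real (w x) * Ep w k x \<partial>lborel) + (\<integral>x. complex_of_real (w x) * Em w k x \<partial>lborel)
   = alpha1 v (complex_of_real \<epsilon> * k)"
proof -
  define H where "H x = (\<integral>y. complex_of_real (w y) * exp (\<i> * k * complex_of_real \<bar>x - y\<bar>) \<partial>lborel)" for x
  have e0: "\<epsilon> \<noteq> 0" using eps_pos by simp
  have "(\<integral>x. complex_of_real (w x) * Ep w k x \<partial>lborel) + (\<integral>x. complex_of_real (w x) * Em w k x \<partial>lborel)
      = (\<integral>x. complex_of_real (w x) * Ep w k x + complex_of_real (w x) * Em w k x \<partial>lborel)"
    by (rule Bochner_Integration.integral_add[symmetric] wEp_int wEm_int)+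
  also have "\<dots> = (\<integral>x. complex_of_real (w x) * H x \<partial>lborel)"
    unfolding H_def EH[symmetric] by (simp add: distrib_left)
  also have "\<dots> = \<bar>\<epsilon>\<bar> *\<^sub>R (\<integral>s. complex_of_real (w (0 + \<epsilon> * s)) * H (0 + \<epsilon> * s) \<partial>lborel)"
    by (rule lborel_integral_real_affine[OF e0])
  also have "\<dots> = (\<integral>s. \<epsilon> *\<^sub>R (complex_of_real (w (0 + \<epsilon> * s)) * H (0 + \<epsilon> * s)) \<partial>lborel)"
    using eps_pos by simp
  also have "\<dots> = (\<integral>s. (\<integral>t. complex_of_real (v s) * exp (\<i> * (complex_of_real \<epsilon> * k) * complex_of_real \<bar>s - t\<bar>) * complex_of_real (v t) \<partial>lborel) \<partial>lborel)"
  proof (rule Bochner_Integration.integral_cong[OF refl])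
    fix s
    have b: "w (0 + \<epsilon> * s) = v s / \<epsilon>" using e0 by (simp add: v_eps_def)
    have "\<epsilon> *\<^sub>R (complex_of_real (w (0 + \<epsilon> * s)) * H (0 + \<epsilon> * s)) = complex_of_real (v s) * H (\<epsilon> * s)"
      unfolding b using e0 by (simp add: cscaleR)
    also have "\<dots> = complex_of_real (v s) * (\<integral>t. complex_of_real (v t) * exp (\<i> * (complex_of_real \<epsilon> * k) * complex_of_real \<bar>s - t\<bar>) \<partial>lborel)"
      unfolding H_def H_scale ..
    also have "\<dots> = (\<integral>t. complex_of_real (v s) * (complex_of_real (v t) * exp (\<i> * (complex_of_real \<epsilon> * k) * complex_of_real \<bar>s - t\<bar>)) \<partial>lborel)"
      by (rule integral_mult_right_zero[symmetric])
    also have "\<dots> = (\<integral>t. complex_of_real (v s) * exp (\<i> * (complex_of_real \<epsilon> * k) * complex_of_real \<bar>s - t\<bar>) * complex_of_real (v t) \<partial>lborel)"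
      by (rule Bochner_Integration.integral_cong) (simp_all add: mult_ac)
    finally show "\<epsilon> *\<^sub>R (complex_of_real (w (0 + \<epsilon> * s)) * H (0 + \<epsilon> * s)) = (\<integral>t. complex_of_real (v s) * exp (\<i> * (complex_of_real \<epsilon> * k) * complex_of_real \<bar>s - t\<bar>) * complex_of_real (v t) \<partial>lborel)" .
  qed
  also have "\<dots> = alpha1 v (complex_of_real \<epsilon> * k)"
    unfolding alpha1_def ..
  finally show ?thesis .
qed

lemma int_w_psi:
  "(\<integral>y. w y *\<^sub>R psi_tau m v \<epsilon> z \<tau> y \<partial>lborel) = (\<i>/2 * alpha1 v (complex_of_real \<epsilon> * k)) *s (ZZ m z *v \<tau>)"
proof -
  define Ip where "Ip = (\<integral>x. complex_of_real (w x) * Ep w k x \<partial>lborel)"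
  have Ip2: "2 * Ip = alpha1 v (complex_of_real \<epsilon> * k)"
    using alpha_sum IpIm unfolding Ip_def by simp
  have pw: "w y *\<^sub>R psi_tau m v \<epsilon> z \<tau> y = (\<i>/2 * (complex_of_real (w y) * Ep w k y)) *s av \<tau>
      + (\<i>/2 * (complex_of_real (w y) * Em w k y)) *s bv \<tau>" for y
    unfolding psi_formula by (simp add: vec2_eq scaleR_nth2 cscaleR algebra_simps)
  have "(\<integral>y. w y *\<^sub>R psi_tau m v \<epsilon> z \<tau> y \<partial>lborel)
     = (\<integral>y. (\<i>/2 * (complex_of_real (w y) * Ep w k y)) *s av \<tau> \<partial>lborel)
     + (\<integral>y. (\<i>/2 * (complex_of_real (w y) * Em w k y)) *s bv \<tau> \<partial>lborel)"
    unfolding pw by (intro Bochner_Integration.integral_add integrable_smul integrable_mult_right wEp_int wEm_int)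
  also have "\<dots> = (\<i>/2 * Ip) *s av \<tau> + (\<i>/2 * Ip) *s bv \<tau>"
    using wEp_int wEm_int IpIm unfolding Ip_def by (simp add: integral_smul)
  also have "\<dots> = (\<i>/2 * alpha1 v (complex_of_real \<epsilon> * k)) *s (ZZ m z *v \<tau>)"
    unfolding Ip2[symmetric] by (simp add: vec2_eq ent two_ne algebra_simps)
  finally show ?thesis .
qed

lemma Mmat_apply:
  "Mmat m A v \<epsilon> z *v \<tau> = \<tau> + A *v ((\<i>/2 * alpha1 v (complex_of_real \<epsilon> * k)) *s (ZZ m z *v \<tau>))"
  unfolding Mmat_def by (simp add: vec2_eq ent two_ne algebra_simps)

lemma Dact_eq:
  "D_action m A v \<epsilon> (psi_tau m v \<epsilon> z \<tau>) (phi_tau \<tau>) x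
     = z *s psi_tau m v \<epsilon> z \<tau> x + w x *\<^sub>R (Mmat m A v \<epsilon> z *v \<tau>)"
  unfolding D_action_def int_w_psi D0_eq Mmat_apply by (simp add: algebra_simps scaleR_right_distrib)

end

lemma L2_diff:
  assumes f: "L2 f" and g: "L2 g"
  shows "L2 (\<lambda>x. f x - g x)"
  unfolding L2_def
proof
  have [measurable]: "f \<in> borel_measurable lborel" "g \<in> borel_measurable lborel"
    using f g unfolding L2_def by auto
  show "(\<lambda>x. f x - g x) \<in> borel_measurable lborel" by measurable
  show "integrable lborel (\<lambda>x. (norm (f x - g x))^2)"
  proof (rule Bochner_Integration.integrable_bound[where f="\<lambda>x. 2 * (norm (f x))^2 + 2 * (norm (g x))^2"])
    show "integrable lborel (\<lambda>x. 2 * (norm (f x))^2 + 2 * (norm (g x))^2)"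
      using f g unfolding L2_def by auto
    show "(\<lambda>x. (norm (f x - g x))^2) \<in> borel_measurable lborel" by measurable
    show "AE x in lborel. norm ((norm (f x - g x))^2) \<le> norm (2 * (norm (f x))^2 + 2 * (norm (g x))^2)"
    proof (intro AE_I2)
      fix x
      have "norm (f x - g x) \<le> norm (f x) + norm (g x)" by (rule norm_triangle_ineq4)
      then have "(norm (f x - g x))^2 \<le> (norm (f x) + norm (g x))^2" by (intro power_mono) auto
      also have "\<dots> \<le> 2 * (norm (f x))^2 + 2 * (norm (g x))^2"
        using sum_squares_bound[of "norm (f x)" "norm (g x)"] by (simp add: power2_eq_square algebra_simps)
      finally show "norm ((norm (f x - g x))^2) \<le> norm (2 * (norm (f x))^2 + 2 * (norm (g x))^2)" by simp
    qed
  qed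
qed

context setting
begin

lemma neg_i_solve:
  fixes a b :: complex
  assumes "- \<i> * a = b" shows "a = \<i> * b"
proof -
  have "a = \<i> * (- \<i> * a)" by simp
  also have "\<dots> = \<i> * b" using assms by simp
  finally show ?thesis .
qed

lemma w_has_integral: "((\<lambda>x. complex_of_real (w x)) has_integral 1) UNIV"
proof -
  have "(w has_integral (\<integral>x. w x \<partial>lborel)) UNIV" by (rule has_integral_integral_real[OF w_int])
  then have "(w has_integral 1) UNIV" using w_one by simp
  from has_integral_of_real[OF this] show ?thesis by simp
qed

lemma w_not_zero_intervals:
  fixes c :: complex
  assumes c: "c \<noteq> 0" and h: "\<And>a b. a \<le> b \<Longrightarrow> ((\<lambda>x. c * complex_of_real (w x)) has_integral 0) {a..b}"
  shows False
proof -
  have "((\<lambda>x. c * complex_of_real (w x)) has_integral c) UNIV"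
    using has_integral_mult_right[OF w_has_integral, of c] by simp
  then have "\<forall>e>0. \<exists>B>0. \<forall>a b. ball 0 B \<subseteq> cbox a b \<longrightarrow>
            norm (integral (cbox a b) (\<lambda>x. if x \<in> UNIV then c * complex_of_real (w x) else 0) - c) < e"
    by (rule has_integral_alt'[THEN iffD1, THEN conjunct2])
  then obtain B where B: "B > 0" "\<And>a b. ball 0 B \<subseteq> cbox a b \<Longrightarrow>
      norm (integral (cbox a b) (\<lambda>x. if x \<in> UNIV then c * complex_of_real (w x) else 0) - c) < cmod c / 2"
    using c by (meson divide_pos_pos zero_less_norm_iff zero_less_numeral)
  have "ball 0 B \<subseteq> cbox (-B) B" by (auto simp: dist_real_def)
  then have lt: "norm (integral (cbox (-B) B) (\<lambda>x. if x \<in> UNIV then c * complex_of_real (w x) else 0) - c) < cmod c / 2" by (rule B(2))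
  have "integral {-B..B} (\<lambda>x. c * complex_of_real (w x)) = 0"
    by (rule integral_unique[OF h]) (use B(1) in simp)
  then show False using lt c by simp
qed

lemma psi_tau_nonzero:
  assumes "psi_tau m v \<epsilon> z \<tau> = (\<lambda>x. 0)"
  shows "\<tau> = 0"
proof -
  have phi_eq: "phi_tau \<tau> x $ 2 = \<i> * \<tau>$1 * complex_of_real (w x) \<and> phi_tau \<tau> x $ 1 = \<i> * \<tau>$2 * complex_of_real (w x)" for x
  proof -
    have "(- \<i>) *s (sigma1 *v phi_tau \<tau> x) = w x *\<^sub>R \<tau>"
      using D0_eq[of \<tau> x] assms by simp
    then have e1: "((- \<i>) *s (sigma1 *v phi_tau \<tau> x)) $ 1 = (w x *\<^sub>R \<tau>) $ 1"
      and e2: "((- \<i>) *s (sigma1 *v phi_tau \<tau> x)) $ 2 = (w x *\<^sub>R \<tau>) $ 2" by simp_all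
    have l1: "((- \<i>) *s (sigma1 *v phi_tau \<tau> x)) $ 1 = - \<i> * phi_tau \<tau> x $ 2" by (simp add: ent)
    have l2: "((- \<i>) *s (sigma1 *v phi_tau \<tau> x)) $ 2 = - \<i> * phi_tau \<tau> x $ 1" by (simp add: ent)
    have "- \<i> * phi_tau \<tau> x $ 2 = complex_of_real (w x) * \<tau>$1 \<and> - \<i> * phi_tau \<tau> x $ 1 = complex_of_real (w x) * \<tau>$2"
      using e1 e2 unfolding l1 l2 scaleR_nth2 by simp
    then have "phi_tau \<tau> x $ 2 = \<i> * (complex_of_real (w x) * \<tau>$1) \<and> phi_tau \<tau> x $ 1 = \<i> * (complex_of_real (w x) * \<tau>$2)"
      using neg_i_solve by blast
    then show ?thesis by (simp add: mult_ac)
  qed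
  have hi: "((\<lambda>x. phi_tau \<tau> x $ j) has_integral 0) {a..b}" if "a \<le> b" for a b j
  proof -
    have "(phi_tau \<tau> has_integral (psi_tau m v \<epsilon> z \<tau> b - psi_tau m v \<epsilon> z \<tau> a)) {a..b}"
      using psi_weak[of \<tau>] that unfolding is_weak_deriv_def by blast
    then have "(phi_tau \<tau> has_integral 0) {a..b}" using assms by simp
    from has_integral_linear[OF this bounded_linear_vec_nth[of j]]
    show ?thesis by (simp add: comp_def)
  qed
  have t1: "\<tau>$1 = 0"
  proof (rule ccontr)
    assume "\<tau>$1 \<noteq> 0"
    then show False
      using w_not_zero_intervals[of "\<i> * \<tau>$1"] hi[of _ _ 2] phi_eq by simp
  qed
  have t2: "\<tau>$2 = 0"
  proof (rule ccontr)
    assume "\<tau>$2 \<noteq> 0"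
    then show False
      using w_not_zero_intervals[of "\<i> * \<tau>$2"] hi[of _ _ 1] phi_eq by simp
  qed
  show "\<tau> = 0" using t1 t2 by (simp add: vec2_eq)
qed


lemma ode_unique:
  assumes uL2: "L2 u" and wd: "is_weak_deriv u ph"
    and ae: "AE x in lborel. (- \<i>) *s (sigma1 *v ph x) + complex_of_real m *s (sigma3 *v u x) = z *s u x"
  shows "u x = 0"
proof -
  have umeas[measurable]: "u \<in> borel_measurable lborel" using uL2 unfolding L2_def by simp
  have ucomp[measurable]: "(\<lambda>x. u x $ i) \<in> borel_measurable lborel" for i
    by (rule borel_measurable_continuous_on[OF _ umeas]) (intro linear_continuous_on bounded_linear_vec_nth)
  have uint: "integrable lborel (\<lambda>x. (norm (u x))^2)" using uL2 unfolding L2_def by simp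
  have comp: "AE x in lborel. ph x $ 2 = \<i> * ((z - complex_of_real m) * u x $ 1) \<and> ph x $ 1 = \<i> * ((z + complex_of_real m) * u x $ 2)"
    using ae
  proof eventually_elim
    fix x assume e: "(- \<i>) *s (sigma1 *v ph x) + complex_of_real m *s (sigma3 *v u x) = z *s u x"
    have e1: "((- \<i>) *s (sigma1 *v ph x) + complex_of_real m *s (sigma3 *v u x)) $ 1 = (z *s u x) $ 1"
      and e2: "((- \<i>) *s (sigma1 *v ph x) + complex_of_real m *s (sigma3 *v u x)) $ 2 = (z *s u x) $ 2"
      using e by simp_all
    have "- \<i> * ph x $ 2 = (z - complex_of_real m) * u x $ 1"
      using e1 by (simp add: ent algebra_simps)
    moreover have "- \<i> * ph x $ 1 = (z + complex_of_real m) * u x $ 2"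
      using e2 apply (simp add: ent) by algebra
    ultimately show "ph x $ 2 = \<i> * ((z - complex_of_real m) * u x $ 1) \<and> ph x $ 1 = \<i> * ((z + complex_of_real m) * u x $ 2)"
      by (auto intro: neg_i_solve)
  qed
  define s where "s c x = k * u x $ 1 + c * (z + complex_of_real m) * u x $ 2" for c x
  have kk2: "k * k = (z - complex_of_real m) * (z + complex_of_real m)"
    using k_sq by (simp add: power2_eq_square algebra_simps)
  have key: "s c y = 0" if c: "c = 1 \<or> c = -1" for c y
  proof -
    have c2: "c * c = 1" using c by auto
    have hi: "((\<lambda>x. (c * \<i> * k) * s c x) has_integral (s c b - s c a)) {a..b}" if ab: "a \<le> b" for a b
    proof -
      have h: "(ph has_integral (u b - u a)) {a..b}" using wd ab unfolding is_weak_deriv_def by blast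
      have h1: "((\<lambda>x. ph x $ 1) has_integral (u b $ 1 - u a $ 1)) {a..b}"
        using has_integral_linear[OF h bounded_linear_vec_nth[of 1]] by (simp add: comp_def)
      have h2: "((\<lambda>x. ph x $ 2) has_integral (u b $ 2 - u a $ 2)) {a..b}"
        using has_integral_linear[OF h bounded_linear_vec_nth[of 2]] by (simp add: comp_def)
      have hf: "((\<lambda>x. k * ph x $ 1 + c * (z + complex_of_real m) * ph x $ 2) has_integral
          (k * (u b $ 1 - u a $ 1) + c * (z + complex_of_real m) * (u b $ 2 - u a $ 2))) {a..b}"
        by (intro has_integral_add has_integral_mult_right h1 h2)
      have hae: "AE x in lborel. x \<in> {a..b} \<longrightarrow> k * ph x $ 1 + c * (z + complex_of_real m) * ph x $ 2 = (c * \<i> * k) * s c x"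
        using comp
      proof eventually_elim
        fix x assume cx: "ph x $ 2 = \<i> * ((z - complex_of_real m) * u x $ 1) \<and> ph x $ 1 = \<i> * ((z + complex_of_real m) * u x $ 2)"
        have "k * ph x $ 1 + c * (z + complex_of_real m) * ph x $ 2
            = \<i> * (k * (z + complex_of_real m) * u x $ 2 + c * ((z - complex_of_real m) * (z + complex_of_real m)) * u x $ 1)"
          apply (subst conjunct1[OF cx], subst conjunct2[OF cx]) by (simp add: algebra_simps)
        also have "\<dots> = \<i> * (c * c * k * (z + complex_of_real m) * u x $ 2 + c * (k * k) * u x $ 1)"
          using c2 kk2 by simp
        also have "\<dots> = (c * \<i> * k) * s c x"
          unfolding s_def by (simp add: algebra_simps)
        finally show "x \<in> {a..b} \<longrightarrow> k * ph x $ 1 + c * (z + complex_of_real m) * ph x $ 2 = (c * \<i> * k) * s c x" by simp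
      qed
      have "((\<lambda>x. (c * \<i> * k) * s c x) has_integral
          (k * (u b $ 1 - u a $ 1) + c * (z + complex_of_real m) * (u b $ 2 - u a $ 2))) {a..b}"
        by (rule has_integral_AE[OF hae, THEN iffD1, OF hf])
      moreover have "k * (u b $ 1 - u a $ 1) + c * (z + complex_of_real m) * (u b $ 2 - u a $ 2) = s c b - s c a"
        unfolding s_def by (simp add: algebra_simps)
      ultimately show ?thesis by simp
    qed
    have sx: "s c x = s c 0 * exp ((c * \<i> * k) * complex_of_real x)" for x
      by (rule ode_exp[OF hi])
    have "s c 0 = 0"
    proof (rule not_L2_exp)
      show "Re (c * \<i> * k) \<noteq> 0" using c k_Im by auto
      define C where "C = (cmod k + cmod (z + complex_of_real m))^2"
      show "integrable lborel (\<lambda>x. (cmod (s c 0 * exp (c * \<i> * k * complex_of_real x)))^2)"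
      proof (rule Bochner_Integration.integrable_bound[where f="\<lambda>x. C * (norm (u x))^2"])
        show "integrable lborel (\<lambda>x. C * (norm (u x))^2)" using uint by simp
        have "(\<lambda>x. (cmod (s c x))^2) \<in> borel_measurable lborel"
          unfolding s_def by measurable
        then show "(\<lambda>x. (cmod (s c 0 * exp (c * \<i> * k * complex_of_real x)))^2) \<in> borel_measurable lborel"
          by (simp add: sx[symmetric])
        show "AE x in lborel. norm ((cmod (s c 0 * exp (c * \<i> * k * complex_of_real x)))^2) \<le> norm (C * (norm (u x))^2)"
        proof (intro AE_I2)
          fix x
          have cm: "cmod c = 1" using c by auto
          have "cmod (s c x) \<le> cmod (k * u x $ 1) + cmod (c * (z + complex_of_real m) * u x $ 2)"
            unfolding s_def by (rule norm_triangle_ineq)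
          also have "\<dots> = cmod k * cmod (u x $ 1) + cmod (z + complex_of_real m) * cmod (u x $ 2)"
            by (simp add: norm_mult cm)
          also have "\<dots> \<le> cmod k * norm (u x) + cmod (z + complex_of_real m) * norm (u x)"
            by (intro add_mono mult_left_mono) (auto simp: Finite_Cartesian_Product.norm_nth_le)
          also have "\<dots> = (cmod k + cmod (z + complex_of_real m)) * norm (u x)"
            by (simp add: algebra_simps)
          finally have "(cmod (s c x))^2 \<le> ((cmod k + cmod (z + complex_of_real m)) * norm (u x))^2"
            by (intro power_mono) auto
          then have "(cmod (s c x))^2 \<le> C * (norm (u x))^2"
            unfolding C_def by (simp add: power_mult_distrib)
          then show "norm ((cmod (s c 0 * exp (c * \<i> * k * complex_of_real x)))^2) \<le> norm (C * (norm (u x))^2)"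
            unfolding sx[symmetric] C_def by simp
        qed
      qed
    qed
    then show ?thesis using sx[of y] by simp
  qed
  have a1: "k * u x $ 1 + (z + complex_of_real m) * u x $ 2 = 0" using key[of 1 x] unfolding s_def by simp
  have a2: "k * u x $ 1 - (z + complex_of_real m) * u x $ 2 = 0" using key[of "-1" x] unfolding s_def by algebra
  have "2 * k * u x $ 1 = 0" using a1 a2 by algebra
  then have u1: "u x $ 1 = 0" using k_ne by simp
  have "(z + complex_of_real m) * u x $ 2 = 0" using a1 u1 by simp
  then have u2: "u x $ 2 = 0" using zm_ne by simp
  show ?thesis using u1 u2 by (simp add: vec2_eq)
qed


lemma eig_char:
  "psi \<in> eigenspace m A v \<epsilon> z \<longleftrightarrow> (\<exists>\<tau>. Mmat m A v \<epsilon> z *v \<tau> = 0 \<and> psi = psi_tau m v \<epsilon> z \<tau>)"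
proof
  assume "psi \<in> eigenspace m A v \<epsilon> z"
  then obtain phi where H: "H1 psi" "L2 phi" "is_weak_deriv psi phi"
    "AE x in lborel. D_action m A v \<epsilon> psi phi x = z *s psi x"
    unfolding eigenspace_def by blast
  have psiL2: "L2 psi" using H(1) unfolding H1_def by blast
  define c where "c = integral\<^sup>L lborel (\<lambda>y. w y *\<^sub>R psi y)"
  define \<tau> where "\<tau> = - (A *v c)"
  define u where "u x = psi x - psi_tau m v \<epsilon> z \<tau> x" for x
  define ph where "ph x = phi x - phi_tau \<tau> x" for x
  have uL2: "L2 u" unfolding u_def by (rule L2_diff[OF psiL2 psi_L2])
  have wd: "is_weak_deriv u ph"
    unfolding is_weak_deriv_def
  proof (intro allI impI)
    fix a b :: real assume ab: "a \<le> b"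
    have h1: "(phi has_integral (psi b - psi a)) {a..b}" using H(3) ab unfolding is_weak_deriv_def by blast
    have h2: "(phi_tau \<tau> has_integral (psi_tau m v \<epsilon> z \<tau> b - psi_tau m v \<epsilon> z \<tau> a)) {a..b}"
      using psi_weak[of \<tau>] ab unfolding is_weak_deriv_def by blast
    have "((\<lambda>x. phi x - phi_tau \<tau> x) has_integral ((psi b - psi a) - (psi_tau m v \<epsilon> z \<tau> b - psi_tau m v \<epsilon> z \<tau> a))) {a..b}"
      by (rule has_integral_diff[OF h1 h2])
    moreover have "(psi b - psi a) - (psi_tau m v \<epsilon> z \<tau> b - psi_tau m v \<epsilon> z \<tau> a) = u b - u a"
      unfolding u_def by (simp add: algebra_simps)
    ultimately show "(ph has_integral (u b - u a)) {a..b}" unfolding ph_def by simp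
  qed
  have ae: "AE x in lborel. (- \<i>) *s (sigma1 *v ph x) + complex_of_real m *s (sigma3 *v u x) = z *s u x"
    using H(4)
  proof eventually_elim
    fix x assume e1: "D_action m A v \<epsilon> psi phi x = z *s psi x"
    have e1': "(- \<i>) *s (sigma1 *v phi x) + complex_of_real m *s (sigma3 *v psi x) + w x *\<^sub>R (A *v c) = z *s psi x"
      using e1 unfolding D_action_def c_def by simp
    have e2: "(- \<i>) *s (sigma1 *v phi_tau \<tau> x) + complex_of_real m *s (sigma3 *v psi_tau m v \<epsilon> z \<tau> x)
      = z *s psi_tau m v \<epsilon> z \<tau> x + w x *\<^sub>R \<tau>" by (rule D0_eq)
    have "(- \<i>) *s (sigma1 *v ph x) + complex_of_real m *s (sigma3 *v u x)
      = ((- \<i>) *s (sigma1 *v phi x) + complex_of_real m *s (sigma3 *v psi x))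
        - ((- \<i>) *s (sigma1 *v phi_tau \<tau> x) + complex_of_real m *s (sigma3 *v psi_tau m v \<epsilon> z \<tau> x))"
      unfolding u_def ph_def by (simp add: matrix_vector_mult_diff_distrib vector_ssub_ldistrib algebra_simps)
    also have "\<dots> = (z *s psi x - w x *\<^sub>R (A *v c)) - (z *s psi_tau m v \<epsilon> z \<tau> x + w x *\<^sub>R \<tau>)"
      using e1' e2 by (simp add: algebra_simps)
    also have "\<dots> = z *s u x"
      unfolding u_def \<tau>_def by (simp add: vector_ssub_ldistrib algebra_simps)
    finally show "(- \<i>) *s (sigma1 *v ph x) + complex_of_real m *s (sigma3 *v u x) = z *s u x" .
  qed
  have u0: "u x = 0" for x by (rule ode_unique[OF uL2 wd ae])
  then have pe: "psi = psi_tau m v \<epsilon> z \<tau>" unfolding u_def by (auto simp: fun_eq_iff)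
  have "c = (\<i>/2 * alpha1 v (complex_of_real \<epsilon> * k)) *s (ZZ m z *v \<tau>)"
    unfolding c_def pe by (rule int_w_psi)
  then have "Mmat m A v \<epsilon> z *v \<tau> = 0"
    unfolding Mmat_apply by (simp add: \<tau>_def)
  then show "\<exists>\<tau>. Mmat m A v \<epsilon> z *v \<tau> = 0 \<and> psi = psi_tau m v \<epsilon> z \<tau>" using pe by blast
next
  assume "\<exists>\<tau>. Mmat m A v \<epsilon> z *v \<tau> = 0 \<and> psi = psi_tau m v \<epsilon> z \<tau>"
  then obtain \<tau> where t: "Mmat m A v \<epsilon> z *v \<tau> = 0" and pe: "psi = psi_tau m v \<epsilon> z \<tau>" by blast
  have "AE x in lborel. D_action m A v \<epsilon> (psi_tau m v \<epsilon> z \<tau>) (phi_tau \<tau>) x = z *s psi_tau m v \<epsilon> z \<tau> x"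
    by (intro AE_I2) (simp add: Dact_eq t)
  then show "psi \<in> eigenspace m A v \<epsilon> z"
    unfolding eigenspace_def H1_def pe using psi_L2[of \<tau>] phi_L2[of \<tau>] psi_weak[of \<tau>] by blast
qed

lemma psi_tau_zero: "psi_tau m v \<epsilon> z 0 = (\<lambda>x. 0)"
  by (simp add: fun_eq_iff psi_formula)

lemma psi_tau_add: "psi_tau m v \<epsilon> z (x + y) = (\<lambda>t. psi_tau m v \<epsilon> z x t + psi_tau m v \<epsilon> z y t)"
  by (simp add: fun_eq_iff psi_formula vec2_eq matrix_vector_right_distrib algebra_simps)

lemma psi_tau_scale: "psi_tau m v \<epsilon> z (c *s x) = fscale c (psi_tau m v \<epsilon> z x)"
  by (simp add: fun_eq_iff fscale_def psi_formula vec2_eq ent algebra_simps)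

lemma psi_tau_diff: "psi_tau m v \<epsilon> z (x - y) = (\<lambda>t. psi_tau m v \<epsilon> z x t - psi_tau m v \<epsilon> z y t)"
  by (simp add: fun_eq_iff psi_formula vec2_eq ent algebra_simps)

lemma psi_tau_inj: "inj (psi_tau m v \<epsilon> z)"
proof (rule injI)
  fix x y assume "psi_tau m v \<epsilon> z x = psi_tau m v \<epsilon> z y"
  then have "psi_tau m v \<epsilon> z (x - y) = (\<lambda>t. 0)" unfolding psi_tau_diff by simp
  then have "x - y = 0" by (rule psi_tau_nonzero)
  then show "x = y" by simp
qed

end

theorem proposition4p6:
  fixes m :: real and A :: "complex ^ 2 ^ 2" and v :: "real \<Rightarrow> real"
    and \<epsilon> :: real and z :: complex
  assumes v_meas: "v \<in> borel_measurable lborel"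
    and v_L1: "integrable lborel v"
    and v_L2: "integrable lborel (\<lambda>x. (v x)^2)"
    and v_int: "integral\<^sup>L lborel v = 1"
    and eps_pos: "\<epsilon> > 0"
    and z_in: "z \<in> spec_gap m"
  shows "(is_eigenvalue m A v \<epsilon> z \<longleftrightarrow> det (Mmat m A v \<epsilon> z) = 0)
    \<and> (is_eigenvalue m A v \<epsilon> z \<longrightarrow>
         geom_mult m A v \<epsilon> z = vec.dim {\<tau>. Mmat m A v \<epsilon> z *v \<tau> = 0}
       \<and> vec.dim {\<tau>. Mmat m A v \<epsilon> z *v \<tau> = 0} \<le> 2
       \<and> {psi. is_eigenfunction m A v \<epsilon> z psi}
           = {psi_tau m v \<epsilon> z \<tau> | \<tau>. Mmat m A v \<epsilon> z *v \<tau> = 0 \<and> \<tau> \<noteq> 0})"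
proof -
  interpret S: setting m v \<epsilon> z
    using v_meas v_L1 v_L2 v_int eps_pos z_in by (rule setting.intro)
  define M where "M = Mmat m A v \<epsilon> z"
  define K where "K = {\<tau>. M *v \<tau> = 0}"
  have eig: "is_eigenfunction m A v \<epsilon> z psi \<longleftrightarrow> (\<exists>\<tau>. M *v \<tau> = 0 \<and> \<tau> \<noteq> 0 \<and> psi = psi_tau m v \<epsilon> z \<tau>)" for psi
  proof
    assume "is_eigenfunction m A v \<epsilon> z psi"
    then have h1: "psi \<in> eigenspace m A v \<epsilon> z" and h2: "psi \<noteq> (\<lambda>x. 0)"
      unfolding is_eigenfunction_def by auto
    from h1 obtain \<tau> where t: "M *v \<tau> = 0" and p: "psi = psi_tau m v \<epsilon> z \<tau>"
      unfolding S.eig_char M_def by blast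
    have "\<tau> \<noteq> 0"
    proof
      assume "\<tau> = 0"
      then have "psi = (\<lambda>x. 0)" using p S.psi_tau_zero by simp
      then show False using h2 by simp
    qed
    then show "\<exists>\<tau>. M *v \<tau> = 0 \<and> \<tau> \<noteq> 0 \<and> psi = psi_tau m v \<epsilon> z \<tau>" using t p by blast
  next
    assume "\<exists>\<tau>. M *v \<tau> = 0 \<and> \<tau> \<noteq> 0 \<and> psi = psi_tau m v \<epsilon> z \<tau>"
    then obtain \<tau> where t: "M *v \<tau> = 0" and t0: "\<tau> \<noteq> 0" and p: "psi = psi_tau m v \<epsilon> z \<tau>" by blast
    have "psi \<in> eigenspace m A v \<epsilon> z" unfolding S.eig_char M_def[symmetric] using t p by blast
    moreover have "psi \<noteq> (\<lambda>x. 0)"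
    proof
      assume "psi = (\<lambda>x. 0)"
      then have "\<tau> = 0" using p S.psi_tau_nonzero by simp
      then show False using t0 by simp
    qed
    ultimately show "is_eigenfunction m A v \<epsilon> z psi" unfolding is_eigenfunction_def by simp
  qed
  have ev: "is_eigenvalue m A v \<epsilon> z \<longleftrightarrow> (\<exists>\<tau>. M *v \<tau> = 0 \<and> \<tau> \<noteq> 0)"
    unfolding is_eigenvalue_def eig by auto
  have det: "det M = 0 \<longleftrightarrow> (\<exists>\<tau>. M *v \<tau> = 0 \<and> \<tau> \<noteq> 0)"
    using invertible_det_nz[of M] invertible_left_inverse[of M] matrix_left_invertible_ker[of M] by blast
  have es: "eigenspace m A v \<epsilon> z = psi_tau m v \<epsilon> z ` K"
  proof (intro set_eqI iffI)
    fix psi assume "psi \<in> eigenspace m A v \<epsilon> z"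
    then obtain \<tau> where "M *v \<tau> = 0" "psi = psi_tau m v \<epsilon> z \<tau>" unfolding S.eig_char M_def by blast
    then show "psi \<in> psi_tau m v \<epsilon> z ` K" unfolding K_def by blast
  next
    fix psi assume "psi \<in> psi_tau m v \<epsilon> z ` K"
    then obtain \<tau> where "M *v \<tau> = 0" "psi = psi_tau m v \<epsilon> z \<tau>" unfolding K_def by blast
    then show "psi \<in> eigenspace m A v \<epsilon> z" unfolding S.eig_char M_def by blast
  qed
  interpret P: finite_dimensional_vector_space_pair_1 "(*s) :: complex \<Rightarrow> complex^2 \<Rightarrow> complex^2" cart_basis fscale
    by (rule finite_dimensional_vector_space_pair_1.intro[OF vec.finite_dimensional_vector_space_axioms fscale_vector_space])
  have lin: "Vector_Spaces.linear (*s) fscale (psi_tau m v \<epsilon> z)"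
    unfolding Vector_Spaces.linear_iff
  proof (intro conjI allI)
    show "vector_space ((*s) :: complex \<Rightarrow> complex^2 \<Rightarrow> complex^2)" by (rule vec.vector_space_axioms)
    show "vector_space fscale" by (rule fscale_vector_space)
    fix x y :: "complex^2"
    show "psi_tau m v \<epsilon> z (x + y) = psi_tau m v \<epsilon> z x + psi_tau m v \<epsilon> z y"
      unfolding S.psi_tau_add by (simp add: fun_eq_iff)
  next
    fix c :: complex and x :: "complex^2"
    show "psi_tau m v \<epsilon> z (c *s x) = fscale c (psi_tau m v \<epsilon> z x)"
      by (rule S.psi_tau_scale)
  qed
  have inj: "inj_on (psi_tau m v \<epsilon> z) (vec.span K)"
    using S.psi_tau_inj by (rule inj_on_subset) simp
  have dim: "geom_mult m A v \<epsilon> z = vec.dim K"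
    unfolding geom_mult_def es by (rule P.dim_image_eq[OF lin inj])
  have le2: "vec.dim K \<le> 2"
    using dim_subset_UNIV_cart_gen[of K] by simp
  have ef: "{psi. is_eigenfunction m A v \<epsilon> z psi} = {psi_tau m v \<epsilon> z \<tau> | \<tau>. M *v \<tau> = 0 \<and> \<tau> \<noteq> 0}"
    using eig by auto
  have main1: "is_eigenvalue m A v \<epsilon> z \<longleftrightarrow> det M = 0" using ev det by simp
  show ?thesis
    using main1 dim le2 ef unfolding K_def M_def by simp
qed

end
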